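(* A $\mathtt{dCBN}$ term $M$ is $\mathtt{dCBN}$-meaningful if and only if $\mathrm{nf}(\mathcal T^n(M))\neq\emptyset$.
   Context: \textbf{dCBN.} Terms $M,N::=x\mid\lambda x.M\mid MN\mid M[N/x]$ ($M[N/x]$ explicit substitution binding $x$, $M\{N/x\}$ capture-avoiding substitution); list contexts $L::=\square\mid L[N/x]$. $\to_n$ is the closure under all contexts of $L\langle\lambda x.M\rangle N\mapsto L\langle M[N/x]\rangle$ and $M[N/x]\mapsto M\{N/x\}$. Testing contexts $T::=\square\mid TN\mid(\lambda x.T)N$. $M$ is $\mathtt{dCBN}$-meaningful if there is a testing context $T$ with $T\langle M\rangle\to_n^*\lambda x.x$. \textbf{Resource calculus.} Resource terms $m,n::=x\mid\lambda x.m\mid mn\mid m[n/x]\mid\mathrm{der}\,m\mid[m_1,\dots,m_k]$ ($k\ge0$ multisets); $l::=\square\mid l[n/x]$. Reduction (to a resource term or zero $\emptyset$), closed under all contexts: $\mathrm{der}(l\langle[m]\rangle)\to l\langle m\rangle$; $\mathrm{der}(l\langle[m_1,\dots,m_k]\rangle)\to\emptyset$ if $k\ne1$; $l\langle\lambda x.m\rangle n\to l\langle m[n/x]\rangle$; $m[l\langle[n_1,\dots,n_k]\rangle/x]\to l\langle m\{n_{\sigma(1)}/x_1,\dots,n_{\sigma(k)}/x_k\}\rangle$ for each permutation $\sigma$ when $x_1,\dots,x_k$ are exactly the free occurrences of $x$ in $m$, else $\to\emptyset$. \textbf{dCBN Taylor expansion.} $x\sqsubset_n x$; $\lambda x.m\sqsubset_n\lambda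 x.M$ if $m\sqsubset_n M$; $m[n_1,\dots,n_k]\sqsubset_n MN$ and $m[[n_1,\dots,n_k]/x]\sqsubset_n M[N/x]$ ($k\ge0$) if $m\sqsubset_n M$ and all $n_i\sqsubset_n N$. $\mathcal T^n(M)=\{m\mid m\sqsubset_n M\}$; $\mathrm{nf}(\mathcal T^n(M))$ is the set of normal resource terms $p$ with $m\to^*p$ for some $m\in\mathcal T^n(M)$. *)

theory Defs
  imports Main "HOL-Library.Multiset"
begin

text \<open>Variables are de Bruijn indices. DLam M binds index 0 in M; DES M N is the explicit
  substitution M[N/x], binding index 0 in M (not in N).\<close>

datatype dterm = DVar nat | DLam dterm | DApp dterm dterm | DES dterm dterm

primrec dlift :: "nat \<Rightarrow> nat \<Rightarrow> dterm \<Rightarrow> dterm" where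
  "dlift k c (DVar i) = (if i < c then DVar i else DVar (i + k))"
| "dlift k c (DLam M) = DLam (dlift k (Suc c) M)"
| "dlift k c (DApp M N) = DApp (dlift k c M) (dlift k c N)"
| "dlift k c (DES M N) = DES (dlift k (Suc c) M) (dlift k c N)"

text \<open>Capture-avoiding meta-substitution M{N/j}: index j replaced by N (N lives in the
  context of depth j), indices above j decremented.\<close>
primrec dsubst :: "dterm \<Rightarrow> nat \<Rightarrow> dterm \<Rightarrow> dterm" where
  "dsubst (DVar i) j N = (if i < j then DVar i else if i = j then N else DVar (i - 1))"
| "dsubst (DLam M) j N = DLam (dsubst M (Suc j) (dlift 1 0 N))"
| "dsubst (DApp M1 M2) j N = DApp (dsubst M1 j N) (dsubst M2 j N)"
| "dsubst (DES M1 M2) j N = DES (dsubst M1 (Suc j) (dlift 1 0 N)) (dsubst M2 j N)"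

text \<open>List contexts L ::= [] | L[N/x]; the list head is the outermost substitution.\<close>
primrec dplugL :: "dterm list \<Rightarrow> dterm \<Rightarrow> dterm" where
  "dplugL [] M = M"
| "dplugL (N # Ns) M = DES (dplugL Ns M) N"

inductive nstep :: "dterm \<Rightarrow> dterm \<Rightarrow> bool" where
  dB: "nstep (DApp (dplugL Ls (DLam M)) N) (dplugL Ls (DES M (dlift (length Ls) 0 N)))"
| ls: "nstep (DES M N) (dsubst M 0 N)"
| lam: "nstep M M' \<Longrightarrow> nstep (DLam M) (DLam M')"
| appL: "nstep M M' \<Longrightarrow> nstep (DApp M N) (DApp M' N)"
| appR: "nstep N N' \<Longrightarrow> nstep (DApp M N) (DApp M N')"
| esL: "nstep M M' \<Longrightarrow> nstep (DES M N) (DES M' N)"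
| esR: "nstep N N' \<Longrightarrow> nstep (DES M N) (DES M N')"

text \<open>Testing contexts T ::= [] | T N | (\<lambda>x.T) N (plugging may capture).\<close>
datatype tctx = THole | TApp tctx dterm | TLamApp tctx dterm

primrec tplug :: "tctx \<Rightarrow> dterm \<Rightarrow> dterm" where
  "tplug THole M = M"
| "tplug (TApp T N) M = DApp (tplug T M) N"
| "tplug (TLamApp T N) M = DApp (DLam (tplug T M)) N"

definition dCBN_meaningful :: "dterm \<Rightarrow> bool" where
  "dCBN_meaningful M \<longleftrightarrow> (\<exists>T. nstep\<^sup>*\<^sup>* (tplug T M) (DLam (DVar 0)))"

datatype rterm = RVar nat | RLam rterm | RApp rterm rterm | RES rterm rterm
  | RDer rterm | RBag "rterm multiset"

primrec rlift :: "nat \<Rightarrow> nat \<Rightarrow> rterm \<Rightarrow> rterm" where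
  "rlift k c (RVar i) = (if i < c then RVar i else RVar (i + k))"
| "rlift k c (RLam m) = RLam (rlift k (Suc c) m)"
| "rlift k c (RApp m n) = RApp (rlift k c m) (rlift k c n)"
| "rlift k c (RES m n) = RES (rlift k (Suc c) m) (rlift k c n)"
| "rlift k c (RDer m) = RDer (rlift k c m)"
| "rlift k c (RBag B) = RBag (image_mset (rlift k c) B)"

primrec occ :: "nat \<Rightarrow> rterm \<Rightarrow> nat" where
  "occ k (RVar i) = (if i = k then 1 else 0)"
| "occ k (RLam m) = occ (Suc k) m"
| "occ k (RApp m n) = occ k m + occ k n"
| "occ k (RES m n) = occ (Suc k) m + occ k n"
| "occ k (RDer m) = occ k m"
| "occ k (RBag B) = sum_mset (image_mset (occ k) B)"

text \<open>Linear substitution: lsub k m ns m' holds iff m' is obtained from m by replacing the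
  free occurrences of index k bijectively by the elements of the multiset ns (which live in
  the context of depth k), decrementing the free indices above k. Ranging over all
  splittings of ns realises all permutations \<sigma>.\<close>
inductive lsub :: "nat \<Rightarrow> rterm \<Rightarrow> rterm multiset \<Rightarrow> rterm \<Rightarrow> bool"
  and lsub_bag :: "nat \<Rightarrow> rterm multiset \<Rightarrow> rterm multiset \<Rightarrow> rterm multiset \<Rightarrow> bool" where
  var_eq: "lsub k (RVar k) {#n#} n"
| var_lt: "i < k \<Longrightarrow> lsub k (RVar i) {#} (RVar i)"
| var_gt: "i > k \<Longrightarrow> lsub k (RVar i) {#} (RVar (i - 1))"
| lam: "lsub (Suc k) m (image_mset (rlift 1 0) ns) m' \<Longrightarrow> lsub k (RLam m) ns (RLam m')"
| app: "lsub k m ns1 m' \<Longrightarrow> lsub k n ns2 n' \<Longrightarrow> lsub k (RApp m n) (ns1 + ns2) (RApp m' n')"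
| es: "lsub (Suc k) m (image_mset (rlift 1 0) ns1) m' \<Longrightarrow> lsub k n ns2 n'
      \<Longrightarrow> lsub k (RES m n) (ns1 + ns2) (RES m' n')"
| der: "lsub k m ns m' \<Longrightarrow> lsub k (RDer m) ns (RDer m')"
| bag: "lsub_bag k B ns B' \<Longrightarrow> lsub k (RBag B) ns (RBag B')"
| bag_empty: "lsub_bag k {#} {#} {#}"
| bag_add: "lsub k m ns1 m' \<Longrightarrow> lsub_bag k B ns2 B'
      \<Longrightarrow> lsub_bag k (add_mset m B) (ns1 + ns2) (add_mset m' B')"

primrec rplugL :: "rterm list \<Rightarrow> rterm \<Rightarrow> rterm" where
  "rplugL [] m = m"
| "rplugL (n # ns) m = RES (rplugL ns m) n"

text \<open>One-step reduction to a resource term (Some t) or to zero (None); contexts are linear,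
  so zero is absorbing.\<close>
inductive rstep :: "rterm \<Rightarrow> rterm option \<Rightarrow> bool" where
  der_one: "rstep (RDer (rplugL ls (RBag {#m#}))) (Some (rplugL ls m))"
| der_zero: "size B \<noteq> 1 \<Longrightarrow> rstep (RDer (rplugL ls (RBag B))) None"
| beta: "rstep (RApp (rplugL ls (RLam m)) n) (Some (rplugL ls (RES m (rlift (length ls) 0 n))))"
| subs: "lsub 0 (rlift (length ls) 1 m) B m' \<Longrightarrow>
     rstep (RES m (rplugL ls (RBag B))) (Some (rplugL ls m'))"
| subs_zero: "occ 0 m \<noteq> size B \<Longrightarrow> rstep (RES m (rplugL ls (RBag B))) None"
| c_lam: "rstep m r \<Longrightarrow> rstep (RLam m) (map_option RLam r)"
| c_appL: "rstep m r \<Longrightarrow> rstep (RApp m n) (map_option (\<lambda>m'. RApp m' n) r)"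
| c_appR: "rstep n r \<Longrightarrow> rstep (RApp m n) (map_option (\<lambda>n'. RApp m n') r)"
| c_esL: "rstep m r \<Longrightarrow> rstep (RES m n) (map_option (\<lambda>m'. RES m' n) r)"
| c_esR: "rstep n r \<Longrightarrow> rstep (RES m n) (map_option (\<lambda>n'. RES m n') r)"
| c_der: "rstep m r \<Longrightarrow> rstep (RDer m) (map_option RDer r)"
| c_bag: "rstep m r \<Longrightarrow> rstep (RBag (add_mset m B)) (map_option (\<lambda>m'. RBag (add_mset m' B)) r)"

definition rred :: "rterm \<Rightarrow> rterm \<Rightarrow> bool" where
  "rred m n \<longleftrightarrow> rstep m (Some n)"

definition rnormal :: "rterm \<Rightarrow> bool" where
  "rnormal p \<longleftrightarrow> (\<nexists>r. rstep p r)"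

inductive taylor_n :: "rterm \<Rightarrow> dterm \<Rightarrow> bool" where
  var: "taylor_n (RVar x) (DVar x)"
| lam: "taylor_n m M \<Longrightarrow> taylor_n (RLam m) (DLam M)"
| app: "taylor_n m M \<Longrightarrow> (\<forall>n\<in>#B. taylor_n n N) \<Longrightarrow> taylor_n (RApp m (RBag B)) (DApp M N)"
| es: "taylor_n m M \<Longrightarrow> (\<forall>n\<in>#B. taylor_n n N) \<Longrightarrow> taylor_n (RES m (RBag B)) (DES M N)"

definition Taylor_n :: "dterm \<Rightarrow> rterm set" where
  "Taylor_n M = {m. taylor_n m M}"

definition nf_set :: "rterm set \<Rightarrow> rterm set" where
  "nf_set S = {p. rnormal p \<and> (\<exists>m\<in>S. rred\<^sup>*\<^sup>* m p)}"

end

theory Submission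
  imports Defs "HOL-Library.Function_Algebras"
begin

lemma rlift_0[simp]: "rlift 0 c m = m"
  by (induction m arbitrary: c) (auto intro: multiset.map_ident_strong)

lemma rlift_rlift: "rlift a c (rlift b c m) = rlift (a + b) c m"
  by (induction m arbitrary: c) (auto simp: multiset.map_comp intro!: multiset.map_cong0)

lemma dlift_0[simp]: "dlift 0 c M = M"
  by (induction M arbitrary: c) auto

primrec rsz :: "rterm \<Rightarrow> nat" where
  "rsz (RVar i) = 1"
| "rsz (RLam m) = Suc (rsz m)"
| "rsz (RApp m n) = Suc (rsz m + rsz n)"
| "rsz (RES m n) = Suc (rsz m + rsz n)"
| "rsz (RDer m) = Suc (rsz m)"
| "rsz (RBag B) = Suc (sum_mset (image_mset rsz B))"

lemma rsz_rlift[simp]: "rsz (rlift k c m) = rsz m"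
  by (induction m arbitrary: c) (auto simp: multiset.map_comp o_def intro!: arg_cong[where f=sum_mset] multiset.map_cong0)

lemma rsz_pos: "0 < rsz m" by (cases m) auto


inductive rwf :: "rterm \<Rightarrow> bool" where
  rwf_var: "rwf (RVar x)"
| rwf_lam: "rwf m \<Longrightarrow> rwf (RLam m)"
| rwf_app: "rwf m \<Longrightarrow> \<forall>b\<in>#B. rwf b \<Longrightarrow> rwf (RApp m (RBag B))"
| rwf_es: "rwf m \<Longrightarrow> \<forall>b\<in>#B. rwf b \<Longrightarrow> rwf (RES m (RBag B))"

inductive_cases rwf_VarE: "rwf (RVar x)"
inductive_cases rwf_LamE: "rwf (RLam m)"
inductive_cases rwf_AppE: "rwf (RApp m n)"
inductive_cases rwf_ESE: "rwf (RES m n)"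
inductive_cases rwf_DerE: "rwf (RDer m)"
inductive_cases rwf_BagE: "rwf (RBag B)"

lemma rwf_simps[simp]:
  "rwf (RVar x)"
  "rwf (RLam m) \<longleftrightarrow> rwf m"
  "rwf (RApp m n) \<longleftrightarrow> rwf m \<and> (\<exists>B. n = RBag B \<and> (\<forall>b\<in>#B. rwf b))"
  "rwf (RES m n) \<longleftrightarrow> rwf m \<and> (\<exists>B. n = RBag B \<and> (\<forall>b\<in>#B. rwf b))"
  "\<not> rwf (RDer m)"
  "\<not> rwf (RBag B)"
  by (auto intro: rwf.intros elim: rwf_LamE rwf_AppE rwf_ESE rwf_DerE rwf_BagE)

lemma rwf_rlift: "rwf m \<Longrightarrow> rwf (rlift k c m)"
  by (induction m arbitrary: c rule: rwf.induct) auto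

lemma rwf_rplugL: "rwf (rplugL ls x) \<longleftrightarrow> rwf x \<and> (\<forall>l\<in>set ls. \<exists>B. l = RBag B \<and> (\<forall>b\<in>#B. rwf b))"
  by (induction ls) auto

lemma lsub_rwf_gen:
  "lsub k m ns m' \<Longrightarrow> (rwf m \<longrightarrow> (\<forall>n\<in>#ns. rwf n) \<longrightarrow> rwf m') \<and>
     (\<forall>B. m = RBag B \<longrightarrow> (\<forall>b\<in>#B. rwf b) \<longrightarrow> (\<forall>n\<in>#ns. rwf n) \<longrightarrow> (\<exists>B'. m' = RBag B' \<and> (\<forall>b\<in>#B'. rwf b)))"
  "lsub_bag k B ns B' \<Longrightarrow> (\<forall>b\<in>#B. rwf b) \<longrightarrow> (\<forall>n\<in>#ns. rwf n) \<longrightarrow> (\<forall>b\<in>#B'. rwf b)"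
proof (induction rule: lsub_lsub_bag.inducts)
  case (lam k m ns m')
  then show ?case by (auto intro: rwf_rlift)
next
  case (app k m ns1 m' n ns2 n')
  then show ?case by auto
next
  case (es k m ns1 m' n ns2 n')
  then show ?case by (auto intro: rwf_rlift)
qed auto

lemma lsub_rwf: "lsub k m ns m' \<Longrightarrow> rwf m \<Longrightarrow> (\<forall>n\<in>#ns. rwf n) \<Longrightarrow> rwf m'"
  using lsub_rwf_gen(1) by blast

lemma lsub_rsz:
  "lsub k m ns m' \<Longrightarrow> rsz m' \<le> rsz m + sum_mset (image_mset rsz ns)"
  "lsub_bag k B ns B' \<Longrightarrow> sum_mset (image_mset rsz B') \<le> sum_mset (image_mset rsz B) + sum_mset (image_mset rsz ns)"
proof (induction rule: lsub_lsub_bag.inducts)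
  case (lam k m ns m')
  then show ?case by (simp add: multiset.map_comp o_def)
next
  case (es k m ns1 m' n ns2 n')
  then show ?case by (simp add: multiset.map_comp o_def)
qed auto

lemma rplugL_eq_Bag[simp]: "rplugL ls x = RBag B \<longleftrightarrow> ls = [] \<and> x = RBag B"
  by (cases ls) auto

lemma rsz_rplugL: "rsz (rplugL ls x) = rsz x + (\<Sum>l\<leftarrow>ls. Suc (rsz l))"
  by (induction ls) auto

lemma rsz_rplugL_less: "rsz x' < rsz x \<Longrightarrow> rsz (rplugL ls x') < rsz (rplugL ls x)"
  by (induction ls) auto

lemma rstep_rsz: "rstep m r \<Longrightarrow> r = Some m' \<Longrightarrow> rsz m' < rsz m"
proof (induction m r arbitrary: m' rule: rstep.induct)
  case (der_one ls m)
  have "rsz (rplugL ls m) < rsz (rplugL ls (RBag {#m#}))" by (rule rsz_rplugL_less) simp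
  then show ?case using der_one by auto
next
  case (beta ls m n)
  then show ?case by (auto simp: rsz_rplugL)
next
  case (subs ls m B m0)
  from lsub_rsz(1)[OF subs(1)] have h: "rsz m0 \<le> rsz m + sum_mset (image_mset rsz B)" by simp
  have "rsz (rplugL ls m0) < rsz (rplugL ls (RBag B)) + rsz m"
    using h by (simp add: rsz_rplugL)
  then show ?case using subs by auto
qed auto

lemma rstep_rwf_gen: "rstep m r \<Longrightarrow> (\<forall>m'. r = Some m' \<longrightarrow> rwf m \<longrightarrow> rwf m') \<and>
   (\<forall>B m'. m = RBag B \<longrightarrow> r = Some m' \<longrightarrow> (\<forall>b\<in>#B. rwf b) \<longrightarrow> (\<exists>B'. m' = RBag B' \<and> (\<forall>b\<in>#B'. rwf b)))"
proof (induction m r rule: rstep.induct)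
  case (beta ls m n)
  then show ?case by (auto simp: rwf_rplugL) (metis rwf_rlift)
next
  case (subs ls m B m')
  then show ?case by (auto simp: rwf_rplugL intro: rwf_rlift lsub_rwf)
next
  case (c_bag m r B)
  then show ?case by auto
qed auto

lemma rstep_rwf: "rstep m (Some m') \<Longrightarrow> rwf m \<Longrightarrow> rwf m'"
  using rstep_rwf_gen by blast

lemma rred_rwf: "rred\<^sup>*\<^sup>* m m' \<Longrightarrow> rwf m \<Longrightarrow> rwf m'"
  by (induction rule: rtranclp_induct) (auto simp: rred_def intro: rstep_rwf)


declare plus_fun_apply[simp del] zero_fun_apply[simp del]
lemmas fun_ops = plus_fun_apply zero_fun_apply

datatype ty = Atom | Arr "ty multiset" ty

type_synonym ctx = "nat \<Rightarrow> ty multiset"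

definition single :: "nat \<Rightarrow> ty \<Rightarrow> ctx" where
  "single x A = (\<lambda>i. if i = x then {#A#} else {#})"
definition ccons :: "ty multiset \<Rightarrow> ctx \<Rightarrow> ctx" where
  "ccons I \<Gamma> = (\<lambda>i. case i of 0 \<Rightarrow> I | Suc j \<Rightarrow> \<Gamma> j)"
definition shift :: "nat \<Rightarrow> nat \<Rightarrow> ctx \<Rightarrow> ctx" where
  "shift k c \<Gamma> = (\<lambda>i. if i < c then \<Gamma> i else if i < c + k then {#} else \<Gamma> (i - k))"
definition cdel :: "nat \<Rightarrow> ctx \<Rightarrow> ctx" where
  "cdel k \<Gamma> = (\<lambda>i. if i < k then \<Gamma> i else \<Gamma> (Suc i))"

inductive tj :: "ctx \<Rightarrow> rterm \<Rightarrow> ty \<Rightarrow> bool"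
  and tjb :: "ctx \<Rightarrow> rterm multiset \<Rightarrow> ty multiset \<Rightarrow> bool" where
  tvar: "tj (single x A) (RVar x) A"
| tlam: "tj (ccons I \<Gamma>) m A \<Longrightarrow> tj \<Gamma> (RLam m) (Arr I A)"
| tapp: "tj \<Gamma> m (Arr I A) \<Longrightarrow> tjb \<Delta> B I \<Longrightarrow> tj (\<Gamma> + \<Delta>) (RApp m (RBag B)) A"
| tes: "tj (ccons I \<Gamma>) m A \<Longrightarrow> tjb \<Delta> B I \<Longrightarrow> tj (\<Gamma> + \<Delta>) (RES m (RBag B)) A"
| tbnil: "tjb 0 {#} {#}"
| tbadd: "tj \<Gamma> m A \<Longrightarrow> tjb \<Delta> B I \<Longrightarrow> tjb (\<Gamma> + \<Delta>) (add_mset m B) (add_mset A I)"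

inductive_cases tj_VarE: "tj \<Gamma> (RVar x) A"
inductive_cases tj_LamE: "tj \<Gamma> (RLam m) A"
inductive_cases tj_AppE: "tj \<Gamma> (RApp m n) A"
inductive_cases tj_ESE: "tj \<Gamma> (RES m n) A"
inductive_cases tj_DerE: "tj \<Gamma> (RDer m) A"
inductive_cases tj_BagE: "tj \<Gamma> (RBag B) A"

inductive_cases tjb_emptyE: "tjb \<Gamma> {#} I"

lemma tj_Der[simp]: "\<not> tj \<Gamma> (RDer m) A" by (auto elim: tj_DerE)
lemma tj_Bag[simp]: "\<not> tj \<Gamma> (RBag B) A" by (auto elim: tj_BagE)

lemma tj_Var_iff: "tj \<Gamma> (RVar x) A \<longleftrightarrow> \<Gamma> = single x A"
  by (auto elim: tj_VarE intro: tvar)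

lemma tj_Lam_iff: "tj \<Gamma> (RLam m) T \<longleftrightarrow> (\<exists>I A. T = Arr I A \<and> tj (ccons I \<Gamma>) m A)"
  by (auto elim: tj_LamE intro: tlam)

lemma tj_App_iff: "tj \<Theta> (RApp m n) A \<longleftrightarrow>
   (\<exists>\<Gamma> \<Delta> B I. \<Theta> = \<Gamma> + \<Delta> \<and> n = RBag B \<and> tj \<Gamma> m (Arr I A) \<and> tjb \<Delta> B I)"
  apply (rule iffI)
   apply (erule tj_AppE) apply blast
  apply (auto intro: tapp)
  done

lemma tj_ES_iff: "tj \<Theta> (RES m n) A \<longleftrightarrow>
   (\<exists>\<Gamma> \<Delta> B I. \<Theta> = \<Gamma> + \<Delta> \<and> n = RBag B \<and> tj (ccons I \<Gamma>) m A \<and> tjb \<Delta> B I)"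
  apply (rule iffI)
   apply (erule tj_ESE) apply blast
  apply (auto intro: tes)
  done

lemma tjb_induct[consumes 1, case_names nil add]:
  assumes "tjb \<Gamma> B I"
    and "P 0 {#} {#}"
    and "\<And>\<Gamma> m A \<Delta> B I. tj \<Gamma> m A \<Longrightarrow> tjb \<Delta> B I \<Longrightarrow> P \<Delta> B I \<Longrightarrow> P (\<Gamma> + \<Delta>) (add_mset m B) (add_mset A I)"
  shows "P \<Gamma> B I"
  using assms by (induction rule: tj_tjb.inducts(2)[where ?P1.0 = "\<lambda>_ _ _. True"]) auto

lemma tj_tjb_rwf:
  "tj \<Gamma> m A \<Longrightarrow> rwf m"
  "tjb \<Gamma> B I \<Longrightarrow> \<forall>b\<in>#B. rwf b"
  by (induction rule: tj_tjb.inducts) auto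

lemma ccons_0[simp]: "ccons I \<Gamma> 0 = I" by (simp add: ccons_def)
lemma ccons_Suc[simp]: "ccons I \<Gamma> (Suc i) = \<Gamma> i" by (simp add: ccons_def)
lemma ccons_plus: "ccons I \<Gamma> + ccons J \<Delta> = ccons (I + J) (\<Gamma> + \<Delta>)"
  by (rule ext) (simp add: ccons_def fun_ops split: nat.splits)
lemma ccons_zero: "ccons {#} 0 = 0"
  by (rule ext) (simp add: ccons_def fun_ops split: nat.splits)
lemma ccons_inject[simp]: "ccons I \<Gamma> = ccons J \<Delta> \<longleftrightarrow> I = J \<and> \<Gamma> = \<Delta>"
proof
  assume h: "ccons I \<Gamma> = ccons J \<Delta>"
  have "I = J" using fun_cong[OF h, of 0] by simp
  moreover have "\<Gamma> = \<Delta>"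
  proof (rule ext)
    fix i show "\<Gamma> i = \<Delta> i" using fun_cong[OF h, of "Suc i"] by simp
  qed
  ultimately show "I = J \<and> \<Gamma> = \<Delta>" by simp
qed simp
lemma ccons_eta: "ccons (\<Gamma> 0) (\<lambda>i. \<Gamma> (Suc i)) = \<Gamma>"
  by (rule ext) (simp add: ccons_def fun_ops split: nat.splits)

lemma shift_plus: "shift k c (\<Gamma> + \<Delta>) = shift k c \<Gamma> + shift k c \<Delta>"
  by (rule ext) (simp add: shift_def fun_ops)
lemma shift_zero[simp]: "shift k c 0 = 0"
  by (rule ext) (simp add: shift_def fun_ops)
lemma shift_single: "shift k c (single x A) = single (if x < c then x else x + k) A"
  by (rule ext) (auto simp: shift_def single_def)
lemma shift_ccons: "shift k (Suc c) (ccons I \<Gamma>) = ccons I (shift k c \<Gamma>)"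
  by (rule ext) (auto simp: shift_def ccons_def Suc_diff_le split: nat.splits)
lemma shift_1_0: "shift 1 0 \<Delta> = ccons {#} \<Delta>"
  by (rule ext) (auto simp: shift_def ccons_def split: nat.splits)

lemma cdel_plus: "cdel k (\<Gamma> + \<Delta>) = cdel k \<Gamma> + cdel k \<Delta>"
  by (rule ext) (simp add: cdel_def fun_ops)
lemma cdel_zero[simp]: "cdel k 0 = 0"
  by (rule ext) (simp add: cdel_def fun_ops)
lemma cdel_single: "cdel k (single x A) = (if x < k then single x A else if x = k then 0 else single (x - 1) A)"
  by (rule ext) (auto simp: cdel_def single_def fun_ops)
lemma cdel_Suc_ccons: "cdel (Suc k) (ccons I \<Gamma>) = ccons I (cdel k \<Gamma>)"
  by (rule ext) (auto simp: cdel_def ccons_def split: nat.splits)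
lemma cdel_0_ccons: "cdel 0 (ccons I \<Gamma>) = \<Gamma>"
  by (rule ext) (auto simp: cdel_def ccons_def)
lemma single_k: "single x A x = {#A#}" by (simp add: single_def)
lemma single_other: "y \<noteq> x \<Longrightarrow> single x A y = {#}" by (simp add: single_def)

lemma tjb_empty_iff[simp]: "tjb \<Gamma> {#} I \<longleftrightarrow> \<Gamma> = 0 \<and> I = {#}"
proof
  assume "tjb \<Gamma> {#} I"
  then show "\<Gamma> = 0 \<and> I = {#}"
    by (rule tjb_emptyE) auto
qed (auto intro: tbnil)

lemma tjb_tyempty0: "tjb \<Gamma> B I \<Longrightarrow> I = {#} \<Longrightarrow> B = {#} \<and> \<Gamma> = 0"
  by (induction rule: tjb_induct) auto

lemma tjb_tyempty: "tjb \<Gamma> B {#} \<Longrightarrow> B = {#} \<and> \<Gamma> = 0"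
  using tjb_tyempty0 by blast

lemma tjb_size: "tjb \<Gamma> B I \<Longrightarrow> size B = size I"
  by (induction rule: tjb_induct) auto

lemma tjb_union: "tjb \<Gamma>1 B1 I1 \<Longrightarrow> tjb \<Gamma>2 B2 I2 \<Longrightarrow> tjb (\<Gamma>1 + \<Gamma>2) (B1 + B2) (I1 + I2)"
proof (induction rule: tjb_induct)
  case nil
  then show ?case by simp
next
  case (add \<Gamma> m A \<Delta> B I)
  then have "tjb (\<Gamma> + (\<Delta> + \<Gamma>2)) (add_mset m (B + B2)) (add_mset A (I + I2))"
    by (intro tbadd) auto
  then show ?case by (simp add: add.assoc)
qed

lemma tjb_single_iff: "tjb \<Gamma> {#m#} {#A#} \<longleftrightarrow> tj \<Gamma> m A"
proof
  assume "tjb \<Gamma> {#m#} {#A#}"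
  then show "tj \<Gamma> m A"
    by (cases rule: tjb.cases) auto
next
  assume "tj \<Gamma> m A"
  from tbadd[OF this tbnil] show "tjb \<Gamma> {#m#} {#A#}" by simp
qed

lemma tjb_mem: "tjb \<Theta> C I \<Longrightarrow> m \<in># C \<Longrightarrow>
   \<exists>\<Gamma>1 \<Gamma>2 A I'. tj \<Gamma>1 m A \<and> tjb \<Gamma>2 (C - {#m#}) I' \<and> I = add_mset A I' \<and> \<Theta> = \<Gamma>1 + \<Gamma>2"
proof (induction rule: tjb_induct)
  case nil
  then show ?case by simp
next
  case (add \<Gamma> m0 A \<Delta> B I)
  show ?case
  proof (cases "m = m0")
    case True
    then show ?thesis using add by auto
  next
    case False
    then have "m \<in># B" using add by auto
    from add.IH[OF this] obtain \<Gamma>1 \<Gamma>2 A' I' where h: "tj \<Gamma>1 m A'" "tjb \<Gamma>2 (B - {#m#}) I'"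
      "I = add_mset A' I'" "\<Delta> = \<Gamma>1 + \<Gamma>2" by blast
    have "tjb (\<Gamma> + \<Gamma>2) (add_mset m0 (B - {#m#})) (add_mset A I')"
      using add.hyps(1) h(2) by (rule tbadd)
    moreover have "add_mset m0 (B - {#m#}) = add_mset m0 B - {#m#}"
      using False \<open>m \<in># B\<close> by (simp add: diff_add_mset_swap)
    ultimately show ?thesis using h
      by (intro exI[of _ \<Gamma>1] exI[of _ "\<Gamma> + \<Gamma>2"] exI[of _ A'] exI[of _ "add_mset A I'"])
        (auto simp: add_ac)
  qed
qed

lemma tjb_add_mset: "tjb \<Theta> (add_mset m B) I \<Longrightarrow>
   \<exists>\<Gamma>1 \<Gamma>2 A I'. tj \<Gamma>1 m A \<and> tjb \<Gamma>2 B I' \<and> I = add_mset A I' \<and> \<Theta> = \<Gamma>1 + \<Gamma>2"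
  using tjb_mem[of \<Theta> "add_mset m B" I m] by auto

lemma tjb_single_ty: "tjb \<Theta> ns {#A#} \<Longrightarrow> \<exists>n. ns = {#n#} \<and> tj \<Theta> n A"
proof -
  assume h: "tjb \<Theta> ns {#A#}"
  then have "size ns = 1" using tjb_size by fastforce
  then obtain n where "ns = {#n#}" using size_1_singleton_mset by blast
  then show ?thesis using h tjb_single_iff by auto
qed

lemma tjb_split: "tjb \<Delta> B I \<Longrightarrow> I = I1 + I2 \<Longrightarrow>
   \<exists>B1 B2 \<Delta>1 \<Delta>2. B = B1 + B2 \<and> \<Delta> = \<Delta>1 + \<Delta>2 \<and> tjb \<Delta>1 B1 I1 \<and> tjb \<Delta>2 B2 I2"
proof (induction arbitrary: I1 I2 rule: tjb_induct)
  case nil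
  then show ?case by (intro exI[of _ "{#}"] exI[of _ 0]) auto
next
  case (add \<Gamma> m A \<Delta> B I)
  show ?case
  proof (cases "A \<in># I1")
    case True
    then have e: "I1 + I2 = add_mset A ((I1 - {#A#}) + I2)"
      by (metis insert_DiffM union_mset_add_mset_left)
    have "add_mset A I = add_mset A ((I1 - {#A#}) + I2)" by (simp only: add.prems e)
    then have "I = (I1 - {#A#}) + I2" by simp
    from add.IH[OF this] obtain B1 B2 \<Delta>1 \<Delta>2 where h: "B = B1 + B2" "\<Delta> = \<Delta>1 + \<Delta>2"
      "tjb \<Delta>1 B1 (I1 - {#A#})" "tjb \<Delta>2 B2 I2" by blast
    have "tjb (\<Gamma> + \<Delta>1) (add_mset m B1) (add_mset A (I1 - {#A#}))"
      using add.hyps(1) h(3) by (rule tbadd)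
    moreover have "add_mset m B = add_mset m B1 + B2" using h by simp
    moreover have "\<Gamma> + \<Delta> = (\<Gamma> + \<Delta>1) + \<Delta>2" using h by (simp add: add_ac)
    moreover have "add_mset A (I1 - {#A#}) = I1" using True by simp
    ultimately show ?thesis using h(4) by metis
  next
    case False
    have "A \<in># I1 + I2" by (simp add: add.prems[symmetric])
    then have A2: "A \<in># I2" using False by simp
    then have e: "I1 + I2 = add_mset A (I1 + (I2 - {#A#}))"
      by (metis insert_DiffM union_mset_add_mset_right)
    have "add_mset A I = add_mset A (I1 + (I2 - {#A#}))" by (simp only: add.prems e)
    then have "I = I1 + (I2 - {#A#})" by simp
    from add.IH[OF this] obtain B1 B2 \<Delta>1 \<Delta>2 where h: "B = B1 + B2" "\<Delta> = \<Delta>1 + \<Delta>2"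
      "tjb \<Delta>1 B1 I1" "tjb \<Delta>2 B2 (I2 - {#A#})" by blast
    have "tjb (\<Gamma> + \<Delta>2) (add_mset m B2) (add_mset A (I2 - {#A#}))"
      using add.hyps(1) h(4) by (rule tbadd)
    moreover have "add_mset m B = B1 + add_mset m B2" using h by simp
    moreover have "\<Gamma> + \<Delta> = \<Delta>1 + (\<Gamma> + \<Delta>2)" using h by (simp add: add_ac)
    moreover have "add_mset A (I2 - {#A#}) = I2" using A2 by simp
    ultimately show ?thesis using h(3) by metis
  qed
qed

lemma tjb_elems: "tjb \<Theta> B I \<Longrightarrow> b \<in># B \<Longrightarrow> \<exists>\<Gamma> A. tj \<Gamma> b A"
  using tjb_mem by blast

lemma tjb_build: "(\<forall>b\<in>#B. \<exists>\<Gamma> A. tj \<Gamma> b A) \<Longrightarrow> \<exists>\<Theta> I. tjb \<Theta> B I"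
proof (induction B)
  case empty
  then show ?case by auto
next
  case (add x B)
  then obtain \<Theta> I \<Gamma> A where "tjb \<Theta> B I" "tj \<Gamma> x A" by auto
  then show ?case by (blast intro: tbadd)
qed


lemma shift_Suc0_0[simp]: "shift (Suc 0) 0 \<Delta> = ccons {#} \<Delta>"
  using shift_1_0 by simp

lemma rlift_eq_Bag: "rlift k c n = RBag B' \<longleftrightarrow> (\<exists>B0. n = RBag B0 \<and> B' = image_mset (rlift k c) B0)"
  by (cases n) auto

lemma tj_lift:
  "tj \<Gamma> m A \<Longrightarrow> \<forall>c. tj (shift k c \<Gamma>) (rlift k c m) A"
  "tjb \<Gamma> B I \<Longrightarrow> \<forall>c. tjb (shift k c \<Gamma>) (image_mset (rlift k c) B) I"
proof (induction rule: tj_tjb.inducts)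
  case (tvar x A)
  then show ?case by (auto simp: shift_single intro: tj_tjb.intros)
next
  case (tlam I \<Gamma> m A)
  show ?case
  proof
    fix c
    have "tj (ccons I (shift k c \<Gamma>)) (rlift k (Suc c) m) A" using tlam.IH by (metis shift_ccons)
    then show "tj (shift k c \<Gamma>) (rlift k c (RLam m)) (Arr I A)" by (simp add: tj_tjb.tlam)
  qed
next
  case (tapp \<Gamma> m I A \<Delta> B)
  then show ?case by (auto simp: shift_plus intro: tj_tjb.intros)
next
  case (tes I \<Gamma> m A \<Delta> B)
  show ?case
  proof
    fix c
    have "tj (ccons I (shift k c \<Gamma>)) (rlift k (Suc c) m) A" using tes.IH(1) by (metis shift_ccons)
    from tj_tjb.tes[OF this tes.IH(2)[rule_format, of c]] show "tj (shift k c (\<Gamma> + \<Delta>)) (rlift k c (RES m (RBag B))) A"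
      by (simp add: shift_plus)
  qed
next
  case tbnil
  then show ?case by (auto intro: tj_tjb.intros)
next
  case (tbadd \<Gamma> m A \<Delta> B I)
  then show ?case by (auto simp: shift_plus intro: tj_tjb.intros)
qed

lemma tjb_lift1: "tjb \<Delta> ns I \<Longrightarrow> tjb (ccons {#} \<Delta>) (image_mset (rlift 1 0) ns) I"
proof -
  assume h: "tjb \<Delta> ns I"
  from tj_lift(2)[OF h] have "tjb (shift 1 0 \<Delta>) (image_mset (rlift 1 0) ns) I" by blast
  then show ?thesis by (simp add: shift_1_0)
qed

lemma tjb_unlift_aux:
  assumes "\<forall>x\<in>#B. \<forall>\<Gamma> A c. tj \<Gamma> (rlift k c x) A \<longrightarrow> (\<exists>\<Delta>. \<Gamma> = shift k c \<Delta> \<and> tj \<Delta> x A)"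
  shows "tjb \<Gamma> (image_mset (rlift k c) B) I \<Longrightarrow> \<exists>\<Delta>. \<Gamma> = shift k c \<Delta> \<and> tjb \<Delta> B I"
  using assms
proof (induction B arbitrary: \<Gamma> I)
  case empty
  then show ?case by (intro exI[of _ 0]) auto
next
  case (add x B)
  from tjb_add_mset[of \<Gamma> "rlift k c x" "image_mset (rlift k c) B" I] add.prems(1)
  obtain \<Gamma>1 \<Gamma>2 A I' where h: "tj \<Gamma>1 (rlift k c x) A" "tjb \<Gamma>2 (image_mset (rlift k c) B) I'"
    "I = add_mset A I'" "\<Gamma> = \<Gamma>1 + \<Gamma>2" by auto
  have "\<forall>\<Gamma> A c. tj \<Gamma> (rlift k c x) A \<longrightarrow> (\<exists>\<Delta>. \<Gamma> = shift k c \<Delta> \<and> tj \<Delta> x A)"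
    using add.prems(2) by simp
  with h(1) obtain \<Delta>1 where d1: "\<Gamma>1 = shift k c \<Delta>1" "tj \<Delta>1 x A" by blast
  from add.IH[OF h(2)] add.prems(2) obtain \<Delta>2 where d2: "\<Gamma>2 = shift k c \<Delta>2" "tjb \<Delta>2 B I'" by auto
  show ?case using d1 d2 h by (intro exI[of _ "\<Delta>1 + \<Delta>2"]) (auto simp: shift_plus intro: tbadd)
qed

lemma tj_unlift_gen:
  "(\<forall>\<Gamma> A c. tj \<Gamma> (rlift k c m) A \<longrightarrow> (\<exists>\<Delta>. \<Gamma> = shift k c \<Delta> \<and> tj \<Delta> m A)) \<and>
   (\<forall>B. m = RBag B \<longrightarrow> (\<forall>\<Gamma> I c. tjb \<Gamma> (image_mset (rlift k c) B) I \<longrightarrow> (\<exists>\<Delta>. \<Gamma> = shift k c \<Delta> \<and> tjb \<Delta> B I)))"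
proof (induction m)
  case (RVar x)
  show ?case
  proof (intro conjI allI impI)
    fix \<Gamma> A c assume "tj \<Gamma> (rlift k c (RVar x)) A"
    then have "\<Gamma> = single (if x < c then x else x + k) A"
      by (auto simp: tj_Var_iff split: if_splits)
    then show "\<exists>\<Delta>. \<Gamma> = shift k c \<Delta> \<and> tj \<Delta> (RVar x) A"
      by (intro exI[of _ "single x A"]) (simp add: shift_single tvar)
  qed auto
next
  case (RLam m)
  show ?case
  proof (intro conjI allI impI)
    fix \<Gamma> T c assume "tj \<Gamma> (rlift k c (RLam m)) T"
    then obtain I A where h: "T = Arr I A" "tj (ccons I \<Gamma>) (rlift k (Suc c) m) A"
      by (auto simp: tj_Lam_iff)
    from RLam h(2) obtain \<Delta>0 where d: "ccons I \<Gamma> = shift k (Suc c) \<Delta>0" "tj \<Delta>0 m A" by blast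
    define \<Delta> where "\<Delta> = (\<lambda>i. \<Delta>0 (Suc i))"
    have e: "\<Delta>0 = ccons (\<Delta>0 0) \<Delta>" unfolding \<Delta>_def by (simp add: ccons_eta)
    then have "ccons I \<Gamma> = ccons (\<Delta>0 0) (shift k c \<Delta>)" using d(1) by (metis shift_ccons)
    then have "I = \<Delta>0 0" "\<Gamma> = shift k c \<Delta>" by auto
    then show "\<exists>\<Delta>. \<Gamma> = shift k c \<Delta> \<and> tj \<Delta> (RLam m) T"
      using d(2) e h(1) by (intro exI[of _ \<Delta>]) (auto intro: tlam)
  qed auto
next
  case (RApp m n)
  show ?case
  proof (intro conjI allI impI)
    fix \<Gamma> A c assume "tj \<Gamma> (rlift k c (RApp m n)) A"
    then obtain \<Gamma>1 \<Gamma>2 B I where h: "\<Gamma> = \<Gamma>1 + \<Gamma>2" "rlift k c n = RBag B" "tj \<Gamma>1 (rlift k c m) (Arr I A)"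
      "tjb \<Gamma>2 B I" by (auto simp: tj_App_iff)
    from h(2) obtain B0 where b: "n = RBag B0" "B = image_mset (rlift k c) B0" by (auto simp: rlift_eq_Bag)
    from RApp.IH(1) h(3) obtain \<Delta>1 where d1: "\<Gamma>1 = shift k c \<Delta>1" "tj \<Delta>1 m (Arr I A)" by blast
    from RApp.IH(2) b h(4) obtain \<Delta>2 where d2: "\<Gamma>2 = shift k c \<Delta>2" "tjb \<Delta>2 B0 I" by blast
    show "\<exists>\<Delta>. \<Gamma> = shift k c \<Delta> \<and> tj \<Delta> (RApp m n) A"
      using d1 d2 h b by (intro exI[of _ "\<Delta>1 + \<Delta>2"]) (auto simp: shift_plus intro: tapp)
  qed auto
next
  case (RES m n)
  show ?case
  proof (intro conjI allI impI)
    fix \<Gamma> A c assume "tj \<Gamma> (rlift k c (RES m n)) A"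
    then obtain \<Gamma>1 \<Gamma>2 B I where h: "\<Gamma> = \<Gamma>1 + \<Gamma>2" "rlift k c n = RBag B" "tj (ccons I \<Gamma>1) (rlift k (Suc c) m) A"
      "tjb \<Gamma>2 B I" by (auto simp: tj_ES_iff)
    from h(2) obtain B0 where b: "n = RBag B0" "B = image_mset (rlift k c) B0" by (auto simp: rlift_eq_Bag)
    from RES.IH(1) h(3) obtain \<Delta>0 where d: "ccons I \<Gamma>1 = shift k (Suc c) \<Delta>0" "tj \<Delta>0 m A" by blast
    define \<Delta>1 where "\<Delta>1 = (\<lambda>i. \<Delta>0 (Suc i))"
    have e: "\<Delta>0 = ccons (\<Delta>0 0) \<Delta>1" unfolding \<Delta>1_def by (simp add: ccons_eta)
    then have "ccons I \<Gamma>1 = ccons (\<Delta>0 0) (shift k c \<Delta>1)" using d(1) by (metis shift_ccons)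
    then have i: "I = \<Delta>0 0" "\<Gamma>1 = shift k c \<Delta>1" by auto
    from RES.IH(2) b h(4) obtain \<Delta>2 where d2: "\<Gamma>2 = shift k c \<Delta>2" "tjb \<Delta>2 B0 I" by blast
    have "tj (ccons I \<Delta>1) m A" using d(2) e i by simp
    then show "\<exists>\<Delta>. \<Gamma> = shift k c \<Delta> \<and> tj \<Delta> (RES m n) A"
      using i d2 h b by (intro exI[of _ "\<Delta>1 + \<Delta>2"]) (auto simp: shift_plus intro: tes)
  qed auto
next
  case (RDer m)
  then show ?case by auto
next
  case (RBag B)
  have "\<forall>x\<in>#B. \<forall>\<Gamma> A c. tj \<Gamma> (rlift k c x) A \<longrightarrow> (\<exists>\<Delta>. \<Gamma> = shift k c \<Delta> \<and> tj \<Delta> x A)"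
    using RBag by blast
  then show ?case using tjb_unlift_aux by auto
qed

lemma tj_unlift: "tj \<Gamma> (rlift k c m) A \<Longrightarrow> \<exists>\<Delta>. \<Gamma> = shift k c \<Delta> \<and> tj \<Delta> m A"
  using tj_unlift_gen by blast

lemma tjb_unlift: "tjb \<Gamma> (image_mset (rlift k c) B) I \<Longrightarrow> \<exists>\<Delta>. \<Gamma> = shift k c \<Delta> \<and> tjb \<Delta> B I"
  using tj_unlift_gen[of k "RBag B"] by blast

lemma tjb_unlift1: "tjb \<Gamma> (image_mset (rlift 1 0) B) I \<Longrightarrow> \<exists>\<Delta>. \<Gamma> = ccons {#} \<Delta> \<and> tjb \<Delta> B I"
  using tjb_unlift[of \<Gamma> 1 0 B I] by (simp add: shift_1_0)


lemma lsub_var_gt': "i > k \<Longrightarrow> lsub k (RVar i) {#} (RVar (i - Suc 0))"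
  using lsub_lsub_bag.var_gt by simp

lemma lsub_lam': "lsub (Suc k) m (image_mset (rlift (Suc 0) 0) ns) m' \<Longrightarrow> lsub k (RLam m) ns (RLam m')"
  using lsub_lsub_bag.lam by simp

lemma lsub_es': "lsub (Suc k) m (image_mset (rlift (Suc 0) 0) ns1) m' \<Longrightarrow> lsub k n ns2 n'
      \<Longrightarrow> lsub k (RES m n) (ns1 + ns2) (RES m' n')"
  using lsub_lsub_bag.es by simp

lemma ctx_lam_eq: "cdel (Suc k) (ccons I \<Gamma>) + ccons {#} \<Delta> = ccons I (cdel k \<Gamma> + \<Delta>)"
  by (simp add: cdel_Suc_ccons ccons_plus)

lemma tj_subst:
  "tj \<Gamma> m A \<Longrightarrow> \<forall>k \<Delta> ns. tjb \<Delta> ns (\<Gamma> k) \<longrightarrow> (\<exists>m'. lsub k m ns m' \<and> tj (cdel k \<Gamma> + \<Delta>) m' A)"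
  "tjb \<Gamma> B I \<Longrightarrow> \<forall>k \<Delta> ns. tjb \<Delta> ns (\<Gamma> k) \<longrightarrow> (\<exists>B'. lsub_bag k B ns B' \<and> tjb (cdel k \<Gamma> + \<Delta>) B' I)"
proof (induction rule: tj_tjb.inducts)
  case (tvar x A)
  show ?case
  proof (intro allI impI)
    fix k \<Delta> ns assume h: "tjb \<Delta> ns (single x A k)"
    consider "x = k" | "x < k" | "x > k" by linarith
    then show "\<exists>m'. lsub k (RVar x) ns m' \<and> tj (cdel k (single x A) + \<Delta>) m' A"
    proof cases
      case 1
      with h obtain n where "ns = {#n#}" "tj \<Delta> n A" by (auto simp: single_k dest: tjb_single_ty)
      then show ?thesis using 1 by (auto simp: cdel_single intro: lsub_lsub_bag.intros)
    next
      case 2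
      with h have "ns = {#}" "\<Delta> = 0" by (auto simp: single_other dest: tjb_tyempty)
      then show ?thesis using 2
        by (intro exI[of _ "RVar x"]) (auto simp: cdel_single intro: lsub_lsub_bag.intros tj_tjb.tvar)
    next
      case 3
      with h have "ns = {#}" "\<Delta> = 0" by (auto simp: single_other dest: tjb_tyempty)
      then show ?thesis using 3
        by (intro exI[of _ "RVar (x - 1)"]) (auto simp: cdel_single intro: lsub_var_gt' tj_tjb.tvar)
    qed
  qed
next
  case (tlam I \<Gamma> m A)
  show ?case
  proof (intro allI impI)
    fix k \<Delta> ns assume h: "tjb \<Delta> ns (\<Gamma> k)"
    have "tjb (ccons {#} \<Delta>) (image_mset (rlift 1 0) ns) (ccons I \<Gamma> (Suc k))"
      using tjb_lift1[OF h] by simp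
    with tlam.IH obtain m' where "lsub (Suc k) m (image_mset (rlift 1 0) ns) m'"
      "tj (cdel (Suc k) (ccons I \<Gamma>) + ccons {#} \<Delta>) m' A" by blast
    then show "\<exists>m'. lsub k (RLam m) ns m' \<and> tj (cdel k \<Gamma> + \<Delta>) m' (Arr I A)"
      by (auto simp: ctx_lam_eq intro: lsub_lam' tj_tjb.intros)
  qed
next
  case (tapp \<Gamma> m I A \<Delta>' B)
  show ?case
  proof (intro allI impI)
    fix k \<Delta> ns assume h: "tjb \<Delta> ns ((\<Gamma> + \<Delta>') k)"
    then have "tjb \<Delta> ns (\<Gamma> k + \<Delta>' k)" by (simp add: fun_ops)
    from tjb_split[OF this refl] obtain ns1 ns2 \<Delta>1 \<Delta>2 where s: "ns = ns1 + ns2" "\<Delta> = \<Delta>1 + \<Delta>2"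
      "tjb \<Delta>1 ns1 (\<Gamma> k)" "tjb \<Delta>2 ns2 (\<Delta>' k)" by blast
    from tapp.IH(1) s(3) obtain m' where m': "lsub k m ns1 m'" "tj (cdel k \<Gamma> + \<Delta>1) m' (Arr I A)" by blast
    from tapp.IH(2) s(4) obtain B' where b': "lsub_bag k B ns2 B'" "tjb (cdel k \<Delta>' + \<Delta>2) B' I" by blast
    have "lsub k (RApp m (RBag B)) ns (RApp m' (RBag B'))"
      using m'(1) b'(1) s(1) by (auto intro: lsub_lsub_bag.intros)
    moreover have "tj ((cdel k \<Gamma> + \<Delta>1) + (cdel k \<Delta>' + \<Delta>2)) (RApp m' (RBag B')) A"
      using m'(2) b'(2) by (rule tj_tjb.tapp)
    ultimately show "\<exists>m'. lsub k (RApp m (RBag B)) ns m' \<and> tj (cdel k (\<Gamma> + \<Delta>') + \<Delta>) m' A"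
      using s(2) by (auto simp: cdel_plus add_ac)
  qed
next
  case (tes I \<Gamma> m A \<Delta>' B)
  show ?case
  proof (intro allI impI)
    fix k \<Delta> ns assume h: "tjb \<Delta> ns ((\<Gamma> + \<Delta>') k)"
    then have "tjb \<Delta> ns (\<Gamma> k + \<Delta>' k)" by (simp add: fun_ops)
    from tjb_split[OF this refl] obtain ns1 ns2 \<Delta>1 \<Delta>2 where s: "ns = ns1 + ns2" "\<Delta> = \<Delta>1 + \<Delta>2"
      "tjb \<Delta>1 ns1 (\<Gamma> k)" "tjb \<Delta>2 ns2 (\<Delta>' k)" by blast
    have "tjb (ccons {#} \<Delta>1) (image_mset (rlift 1 0) ns1) (ccons I \<Gamma> (Suc k))"
      using tjb_lift1[OF s(3)] by simp
    with tes.IH(1) obtain m' where m': "lsub (Suc k) m (image_mset (rlift 1 0) ns1) m'"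
      "tj (cdel (Suc k) (ccons I \<Gamma>) + ccons {#} \<Delta>1) m' A" by blast
    from tes.IH(2) s(4) obtain B' where b': "lsub_bag k B ns2 B'" "tjb (cdel k \<Delta>' + \<Delta>2) B' I" by blast
    have "lsub k (RES m (RBag B)) ns (RES m' (RBag B'))"
      using m'(1) b'(1) s(1) by (auto intro: lsub_es' lsub_lsub_bag.intros)
    moreover have "tj ((cdel k \<Gamma> + \<Delta>1) + (cdel k \<Delta>' + \<Delta>2)) (RES m' (RBag B')) A"
      using m'(2) b'(2) by (auto simp: ctx_lam_eq intro: tj_tjb.tes)
    ultimately show "\<exists>m'. lsub k (RES m (RBag B)) ns m' \<and> tj (cdel k (\<Gamma> + \<Delta>') + \<Delta>) m' A"
      using s(2) by (auto simp: cdel_plus add_ac)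
  qed
next
  case tbnil
  show ?case
  proof (intro allI impI)
    fix k \<Delta> ns assume "tjb \<Delta> ns ((0::ctx) k)"
    then have "ns = {#}" "\<Delta> = 0" using tjb_tyempty by (auto simp: zero_fun_apply)
    then show "\<exists>B'. lsub_bag k {#} ns B' \<and> tjb (cdel k 0 + \<Delta>) B' {#}"
      by (intro exI[of _ "{#}"]) (simp add: lsub_lsub_bag.bag_empty)
  qed
next
  case (tbadd \<Gamma> m A \<Delta>' B I)
  show ?case
  proof (intro allI impI)
    fix k \<Delta> ns assume h: "tjb \<Delta> ns ((\<Gamma> + \<Delta>') k)"
    then have "tjb \<Delta> ns (\<Gamma> k + \<Delta>' k)" by (simp add: fun_ops)
    from tjb_split[OF this refl] obtain ns1 ns2 \<Delta>1 \<Delta>2 where s: "ns = ns1 + ns2" "\<Delta> = \<Delta>1 + \<Delta>2"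
      "tjb \<Delta>1 ns1 (\<Gamma> k)" "tjb \<Delta>2 ns2 (\<Delta>' k)" by blast
    from tbadd.IH(1) s(3) obtain m' where m': "lsub k m ns1 m'" "tj (cdel k \<Gamma> + \<Delta>1) m' A" by blast
    from tbadd.IH(2) s(4) obtain B' where b': "lsub_bag k B ns2 B'" "tjb (cdel k \<Delta>' + \<Delta>2) B' I" by blast
    have "lsub_bag k (add_mset m B) ns (add_mset m' B')"
      using m'(1) b'(1) s(1) by (auto intro: lsub_lsub_bag.intros)
    moreover have "tjb ((cdel k \<Gamma> + \<Delta>1) + (cdel k \<Delta>' + \<Delta>2)) (add_mset m' B') (add_mset A I)"
      using m'(2) b'(2) by (rule tj_tjb.tbadd)
    ultimately show "\<exists>B'. lsub_bag k (add_mset m B) ns B' \<and> tjb (cdel k (\<Gamma> + \<Delta>') + \<Delta>) B' (add_mset A I)"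
      using s(2) by (auto simp: cdel_plus add_ac)
  qed
qed

lemma ccons_split: "\<exists>\<Gamma>0. \<Gamma> = ccons (\<Gamma> 0) \<Gamma>0"
  using ccons_eta by metis

lemma tj_unsubst:
  "lsub k m ns m' \<Longrightarrow> (rwf m \<longrightarrow> (\<forall>\<Theta> A. tj \<Theta> m' A \<longrightarrow> (\<exists>\<Gamma> \<Delta>. tj \<Gamma> m A \<and> tjb \<Delta> ns (\<Gamma> k) \<and> \<Theta> = cdel k \<Gamma> + \<Delta>))) \<and>
     (\<forall>B. m = RBag B \<longrightarrow> (\<forall>b\<in>#B. rwf b) \<longrightarrow> (\<forall>B' \<Theta> I. m' = RBag B' \<longrightarrow> tjb \<Theta> B' I \<longrightarrow>
        (\<exists>\<Gamma> \<Delta>. tjb \<Gamma> B I \<and> tjb \<Delta> ns (\<Gamma> k) \<and> \<Theta> = cdel k \<Gamma> + \<Delta>)))"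
  "lsub_bag k B ns B' \<Longrightarrow> (\<forall>b\<in>#B. rwf b) \<longrightarrow> (\<forall>\<Theta> I. tjb \<Theta> B' I \<longrightarrow>
        (\<exists>\<Gamma> \<Delta>. tjb \<Gamma> B I \<and> tjb \<Delta> ns (\<Gamma> k) \<and> \<Theta> = cdel k \<Gamma> + \<Delta>))"
proof (induction rule: lsub_lsub_bag.inducts)
  case (var_eq k n)
  show ?case
  proof (intro conjI allI impI)
    fix \<Theta> A assume "tj \<Theta> n A"
    then show "\<exists>\<Gamma> \<Delta>. tj \<Gamma> (RVar k) A \<and> tjb \<Delta> {#n#} (\<Gamma> k) \<and> \<Theta> = cdel k \<Gamma> + \<Delta>"
      by (intro exI[of _ "single k A"] exI[of _ \<Theta>]) (auto simp: single_k cdel_single tjb_single_iff intro: tvar)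
  qed auto
next
  case (var_lt i k)
  show ?case
  proof (intro conjI allI impI)
    fix \<Theta> A assume "tj \<Theta> (RVar i) A"
    then show "\<exists>\<Gamma> \<Delta>. tj \<Gamma> (RVar i) A \<and> tjb \<Delta> {#} (\<Gamma> k) \<and> \<Theta> = cdel k \<Gamma> + \<Delta>"
      using var_lt by (intro exI[of _ "single i A"] exI[of _ 0]) (auto simp: tj_Var_iff single_other cdel_single intro: tvar)
  qed auto
next
  case (var_gt i k)
  show ?case
  proof (intro conjI allI impI)
    fix \<Theta> A assume "tj \<Theta> (RVar (i - 1)) A"
    then show "\<exists>\<Gamma> \<Delta>. tj \<Gamma> (RVar i) A \<and> tjb \<Delta> {#} (\<Gamma> k) \<and> \<Theta> = cdel k \<Gamma> + \<Delta>"
      using var_gt by (intro exI[of _ "single i A"] exI[of _ 0]) (auto simp: tj_Var_iff single_other cdel_single intro: tvar)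
  qed auto
next
  case (lam k m ns m')
  show ?case
  proof (intro conjI allI impI)
    fix \<Theta> T assume w: "rwf (RLam m)" and t: "tj \<Theta> (RLam m') T"
    from t obtain I A where ia: "T = Arr I A" "tj (ccons I \<Theta>) m' A" by (auto simp: tj_Lam_iff)
    from w have "rwf m" by simp
    with lam.IH ia(2) obtain \<Gamma> \<Delta>' where g: "tj \<Gamma> m A" "tjb \<Delta>' (image_mset (rlift 1 0) ns) (\<Gamma> (Suc k))"
      "ccons I \<Theta> = cdel (Suc k) \<Gamma> + \<Delta>'" by blast
    from tjb_unlift1[OF g(2)] obtain \<Delta> where d: "\<Delta>' = ccons {#} \<Delta>" "tjb \<Delta> ns (\<Gamma> (Suc k))" by blast
    obtain \<Gamma>0 where g0: "\<Gamma> = ccons (\<Gamma> 0) \<Gamma>0" using ccons_split by blast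
    have "ccons I \<Theta> = ccons (\<Gamma> 0) (cdel k \<Gamma>0 + \<Delta>)"
      using g(3) d(1) g0 ctx_lam_eq by metis
    then have e: "I = \<Gamma> 0" "\<Theta> = cdel k \<Gamma>0 + \<Delta>" by auto
    have "tj \<Gamma>0 (RLam m) (Arr I A)" using g(1) g0 e(1) by (auto intro: tlam)
    moreover have "tjb \<Delta> ns (\<Gamma>0 k)" using d(2) g0 by (metis ccons_Suc)
    ultimately show "\<exists>\<Gamma> \<Delta>. tj \<Gamma> (RLam m) T \<and> tjb \<Delta> ns (\<Gamma> k) \<and> \<Theta> = cdel k \<Gamma> + \<Delta>"
      using e ia(1) by blast
  qed auto
next
  case (app k m ns1 m' n ns2 n')
  show ?case
  proof (intro conjI allI impI)
    fix \<Theta> A assume w: "rwf (RApp m n)" and t: "tj \<Theta> (RApp m' n') A"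
    from w obtain Bn where wn: "rwf m" "n = RBag Bn" "\<forall>b\<in>#Bn. rwf b" by auto
    from t obtain \<Theta>1 \<Theta>2 B' I where h: "\<Theta> = \<Theta>1 + \<Theta>2" "n' = RBag B'" "tj \<Theta>1 m' (Arr I A)" "tjb \<Theta>2 B' I"
      by (auto simp: tj_App_iff)
    from app.IH(1) wn(1) h(3) obtain \<Gamma>1 \<Delta>1 where g1: "tj \<Gamma>1 m (Arr I A)" "tjb \<Delta>1 ns1 (\<Gamma>1 k)" "\<Theta>1 = cdel k \<Gamma>1 + \<Delta>1"
      by blast
    from app.IH(2) wn(2,3) h(2,4) obtain \<Gamma>2 \<Delta>2 where g2: "tjb \<Gamma>2 Bn I" "tjb \<Delta>2 ns2 (\<Gamma>2 k)" "\<Theta>2 = cdel k \<Gamma>2 + \<Delta>2"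
      by blast
    have "tj (\<Gamma>1 + \<Gamma>2) (RApp m n) A" using g1(1) g2(1) wn(2) by (auto intro: tapp)
    moreover have "tjb (\<Delta>1 + \<Delta>2) (ns1 + ns2) ((\<Gamma>1 + \<Gamma>2) k)" using tjb_union[OF g1(2) g2(2)] by (simp add: fun_ops)
    moreover have "\<Theta> = cdel k (\<Gamma>1 + \<Gamma>2) + (\<Delta>1 + \<Delta>2)" using h(1) g1(3) g2(3) by (simp add: cdel_plus add_ac)
    ultimately show "\<exists>\<Gamma> \<Delta>. tj \<Gamma> (RApp m n) A \<and> tjb \<Delta> (ns1 + ns2) (\<Gamma> k) \<and> \<Theta> = cdel k \<Gamma> + \<Delta>" by blast
  qed auto
next
  case (es k m ns1 m' n ns2 n')
  show ?case
  proof (intro conjI allI impI)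
    fix \<Theta> A assume w: "rwf (RES m n)" and t: "tj \<Theta> (RES m' n') A"
    from w obtain Bn where wn: "rwf m" "n = RBag Bn" "\<forall>b\<in>#Bn. rwf b" by auto
    from t obtain \<Theta>1 \<Theta>2 B' I where h: "\<Theta> = \<Theta>1 + \<Theta>2" "n' = RBag B'" "tj (ccons I \<Theta>1) m' A" "tjb \<Theta>2 B' I"
      by (auto simp: tj_ES_iff)
    from es.IH(1) wn(1) h(3) obtain \<Gamma>1' \<Delta>1' where g1: "tj \<Gamma>1' m A"
      "tjb \<Delta>1' (image_mset (rlift 1 0) ns1) (\<Gamma>1' (Suc k))" "ccons I \<Theta>1 = cdel (Suc k) \<Gamma>1' + \<Delta>1'"
      by blast
    from tjb_unlift1[OF g1(2)] obtain \<Delta>1 where d: "\<Delta>1' = ccons {#} \<Delta>1" "tjb \<Delta>1 ns1 (\<Gamma>1' (Suc k))" by blast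
    obtain \<Gamma>1 where g0: "\<Gamma>1' = ccons (\<Gamma>1' 0) \<Gamma>1" using ccons_split by blast
    have "ccons I \<Theta>1 = ccons (\<Gamma>1' 0) (cdel k \<Gamma>1 + \<Delta>1)"
      using g1(3) d(1) g0 ctx_lam_eq by metis
    then have e: "I = \<Gamma>1' 0" "\<Theta>1 = cdel k \<Gamma>1 + \<Delta>1" by auto
    from es.IH(2) wn(2,3) h(2,4) obtain \<Gamma>2 \<Delta>2 where g2: "tjb \<Gamma>2 Bn I" "tjb \<Delta>2 ns2 (\<Gamma>2 k)" "\<Theta>2 = cdel k \<Gamma>2 + \<Delta>2"
      by blast
    have "tj (ccons I \<Gamma>1) m A" using g1(1) g0 e(1) by simp
    then have "tj (\<Gamma>1 + \<Gamma>2) (RES m n) A" using g2(1) wn(2) by (auto intro: tes)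
    moreover have "tjb \<Delta>1 ns1 (\<Gamma>1 k)" using d(2) g0 by (metis ccons_Suc)
    then have "tjb (\<Delta>1 + \<Delta>2) (ns1 + ns2) ((\<Gamma>1 + \<Gamma>2) k)" using tjb_union[OF _ g2(2)] by (simp add: fun_ops)
    moreover have "\<Theta> = cdel k (\<Gamma>1 + \<Gamma>2) + (\<Delta>1 + \<Delta>2)" using h(1) e(2) g2(3) by (simp add: cdel_plus add_ac)
    ultimately show "\<exists>\<Gamma> \<Delta>. tj \<Gamma> (RES m n) A \<and> tjb \<Delta> (ns1 + ns2) (\<Gamma> k) \<and> \<Theta> = cdel k \<Gamma> + \<Delta>" by blast
  qed auto
next
  case (der k m ns m')
  then show ?case by auto
next
  case (bag k B ns B')
  then show ?case by auto
next
  case (bag_empty k)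
  then show ?case by (auto simp: fun_ops intro: tbnil)
next
  case (bag_add k m ns1 m' B ns2 B')
  show ?case
  proof (intro allI impI)
    fix \<Theta> I assume w: "\<forall>b\<in>#add_mset m B. rwf b" and t: "tjb \<Theta> (add_mset m' B') I"
    from tjb_add_mset[OF t] obtain \<Theta>1 \<Theta>2 A I' where h: "tj \<Theta>1 m' A" "tjb \<Theta>2 B' I'" "I = add_mset A I'"
      "\<Theta> = \<Theta>1 + \<Theta>2" by blast
    from w have wm: "rwf m" and wB: "\<forall>b\<in>#B. rwf b" by auto
    have i1: "\<forall>\<Theta> A. tj \<Theta> m' A \<longrightarrow> (\<exists>\<Gamma> \<Delta>. tj \<Gamma> m A \<and> tjb \<Delta> ns1 (\<Gamma> k) \<and> \<Theta> = cdel k \<Gamma> + \<Delta>)"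
      using bag_add.IH(1) wm by blast
    from i1 h(1) obtain \<Gamma>1 \<Delta>1 where g1: "tj \<Gamma>1 m A" "tjb \<Delta>1 ns1 (\<Gamma>1 k)" "\<Theta>1 = cdel k \<Gamma>1 + \<Delta>1"
      by blast
    from bag_add.IH(2) wB h(2) obtain \<Gamma>2 \<Delta>2 where g2: "tjb \<Gamma>2 B I'" "tjb \<Delta>2 ns2 (\<Gamma>2 k)" "\<Theta>2 = cdel k \<Gamma>2 + \<Delta>2"
      by blast
    have "tjb (\<Gamma>1 + \<Gamma>2) (add_mset m B) I" using g1(1) g2(1) h(3) by (auto intro: tbadd)
    moreover have "tjb (\<Delta>1 + \<Delta>2) (ns1 + ns2) ((\<Gamma>1 + \<Gamma>2) k)" using tjb_union[OF g1(2) g2(2)] by (simp add: fun_ops)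
    moreover have "\<Theta> = cdel k (\<Gamma>1 + \<Gamma>2) + (\<Delta>1 + \<Delta>2)" using h(4) g1(3) g2(3) by (simp add: cdel_plus add_ac)
    ultimately show "\<exists>\<Gamma> \<Delta>. tjb \<Gamma> (add_mset m B) I \<and> tjb \<Delta> (ns1 + ns2) (\<Gamma> k) \<and> \<Theta> = cdel k \<Gamma> + \<Delta>" by blast
  qed
qed


lemma img_rlift_Suc: "image_mset (rlift (Suc n) 0) B = image_mset (rlift n 0) (image_mset (rlift 1 0) B)"
  by (simp add: multiset.map_comp o_def rlift_rlift)

lemma img_rlift_comp: "image_mset (rlift n 0) (image_mset (rlift 1 0) B) = image_mset (rlift (Suc n) 0) B"
  by (simp add: multiset.map_comp o_def rlift_rlift)

lemma img_rlift_comp': "image_mset (rlift n 0) (image_mset (rlift (Suc 0) 0) B) = image_mset (rlift (Suc n) 0) B"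
  using img_rlift_comp by simp

lemma img_rlift_0[simp]: "image_mset (rlift 0 c) B = B"
  by (simp add: multiset.map_ident_strong)

lemma ccons_eq_plus_shift: "ccons I G = \<Gamma> + ccons {#} \<Delta> \<Longrightarrow> I = \<Gamma> 0 \<and> G = (\<lambda>i. \<Gamma> (Suc i)) + \<Delta>"
proof -
  assume h: "ccons I G = \<Gamma> + ccons {#} \<Delta>"
  have "I = \<Gamma> 0" using fun_cong[OF h, of 0] by (simp add: fun_ops)
  moreover have "G = (\<lambda>i. \<Gamma> (Suc i)) + \<Delta>"
  proof (rule ext)
    fix i show "G i = ((\<lambda>i. \<Gamma> (Suc i)) + \<Delta>) i" using fun_cong[OF h, of "Suc i"] by (simp add: fun_ops)
  qed
  ultimately show ?thesis ..
qed

lemma tj_beta: "tj \<Gamma>1 (rplugL ls (RLam p)) (Arr I A) \<Longrightarrow> tjb \<Delta> B I \<Longrightarrow>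
   tj (\<Gamma>1 + \<Delta>) (rplugL ls (RES p (RBag (image_mset (rlift (length ls) 0) B)))) A"
proof (induction ls arbitrary: \<Gamma>1 \<Delta> B)
  case Nil
  then show ?case by (auto simp: tj_Lam_iff intro: tes)
next
  case (Cons l ls)
  from Cons.prems(1) obtain G Dl Bl J where h: "\<Gamma>1 = G + Dl" "l = RBag Bl"
    "tj (ccons J G) (rplugL ls (RLam p)) (Arr I A)" "tjb Dl Bl J" by (auto simp: tj_ES_iff)
  have "tj (ccons J G + ccons {#} \<Delta>) (rplugL ls (RES p (RBag (image_mset (rlift (length ls) 0) (image_mset (rlift 1 0) B))))) A"
    using Cons.IH[OF h(3) tjb_lift1[OF Cons.prems(2)]] .
  then have "tj (ccons J (G + \<Delta>)) (rplugL ls (RES p (RBag (image_mset (rlift (Suc (length ls)) 0) B)))) A"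
    by (simp add: ccons_plus img_rlift_comp img_rlift_comp')
  from tes[OF this h(4)] show ?case using h(1,2) by (simp add: add_ac)
qed

lemma tj_unbeta: "tj \<Theta> (rplugL ls (RES p (RBag (image_mset (rlift (length ls) 0) B)))) A \<Longrightarrow>
   \<exists>\<Gamma>1 \<Delta> I. \<Theta> = \<Gamma>1 + \<Delta> \<and> tj \<Gamma>1 (rplugL ls (RLam p)) (Arr I A) \<and> tjb \<Delta> B I"
proof (induction ls arbitrary: \<Theta> B)
  case Nil
  then show ?case by (auto simp: tj_ES_iff intro: tlam)
next
  case (Cons l ls)
  from Cons.prems obtain G Dl Bl J where h: "\<Theta> = G + Dl" "l = RBag Bl"
    "tj (ccons J G) (rplugL ls (RES p (RBag (image_mset (rlift (Suc (length ls)) 0) B)))) A" "tjb Dl Bl J"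
    by (auto simp: tj_ES_iff)
  from h(3) have "tj (ccons J G) (rplugL ls (RES p (RBag (image_mset (rlift (length ls) 0) (image_mset (rlift 1 0) B))))) A"
    by (simp only: img_rlift_comp)
  from Cons.IH[OF this] obtain \<Gamma>1' \<Delta>' I where g: "ccons J G = \<Gamma>1' + \<Delta>'" "tj \<Gamma>1' (rplugL ls (RLam p)) (Arr I A)"
    "tjb \<Delta>' (image_mset (rlift 1 0) B) I" by blast
  from tjb_unlift1[OF g(3)] obtain \<Delta> where d: "\<Delta>' = ccons {#} \<Delta>" "tjb \<Delta> B I" by blast
  define \<Gamma>0 where "\<Gamma>0 = (\<lambda>i. \<Gamma>1' (Suc i))"
  have "ccons J G = \<Gamma>1' + ccons {#} \<Delta>" using g(1) d(1) by simp
  from ccons_eq_plus_shift[OF this] have e: "J = \<Gamma>1' 0" "G = \<Gamma>0 + \<Delta>" unfolding \<Gamma>0_def by auto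
  have "tj (ccons J \<Gamma>0) (rplugL ls (RLam p)) (Arr I A)" using g(2) e(1) ccons_eta[of \<Gamma>1'] unfolding \<Gamma>0_def by simp
  from tes[OF this h(4)] have "tj (\<Gamma>0 + Dl) (rplugL (l # ls) (RLam p)) (Arr I A)" using h(2) by simp
  then show ?case using h(1) e(2) d(2) by (intro exI[of _ "\<Gamma>0 + Dl"] exI[of _ \<Delta>] exI[of _ I]) (auto simp: add_ac)
qed


lemma mset_split_size: "j \<le> size (M::'a multiset) \<Longrightarrow> \<exists>A B. M = A + B \<and> size A = j"
proof (induction M arbitrary: j)
  case empty
  then show ?case by auto
next
  case (add x M)
  show ?case
  proof (cases j)
    case 0
    then show ?thesis by auto
  next
    case (Suc j')
    with add.prems have "j' \<le> size M" by simp
    from add.IH[OF this] obtain A B where "M = A + B" "size A = j'" by blast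
    then show ?thesis using Suc by (intro exI[of _ "add_mset x A"] exI[of _ B]) auto
  qed
qed

lemma lsub_exists: "\<forall>k (ns::rterm multiset). occ k m = size ns \<longrightarrow> (\<exists>m'. lsub k m ns m')"
proof (induction m)
  case (RVar i)
  show ?case
  proof (intro allI impI)
    fix k and ns :: "rterm multiset" assume h: "occ k (RVar i) = size ns"
    consider "i = k" | "i < k" | "i > k" by linarith
    then show "\<exists>m'. lsub k (RVar i) ns m'"
    proof cases
      case 1
      with h have "size ns = 1" by simp
      then obtain n where "ns = {#n#}" using size_1_singleton_mset by blast
      then show ?thesis using 1 by (auto intro: lsub_lsub_bag.var_eq)
    next
      case 2
      with h have "ns = {#}" by simp
      then show ?thesis using 2 by (auto intro: lsub_lsub_bag.var_lt)
    next
      case 3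
      with h have "ns = {#}" by simp
      then show ?thesis using 3 by (auto intro: lsub_lsub_bag.var_gt)
    qed
  qed
next
  case (RLam m)
  show ?case
  proof (intro allI impI)
    fix k and ns :: "rterm multiset" assume h: "occ k (RLam m) = size ns"
    then have "occ (Suc k) m = size (image_mset (rlift 1 0) ns)" by simp
    with RLam obtain m' where "lsub (Suc k) m (image_mset (rlift 1 0) ns) m'" by blast
    then show "\<exists>m'. lsub k (RLam m) ns m'" by (auto intro: lsub_lam')
  qed
next
  case (RApp m n)
  show ?case
  proof (intro allI impI)
    fix k and ns :: "rterm multiset" assume h: "occ k (RApp m n) = size ns"
    then obtain ns1 ns2 where s: "ns = ns1 + ns2" "size ns1 = occ k m"
      using mset_split_size[of "occ k m" ns] by auto
    with h have "occ k n = size ns2" by simp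
    moreover have "occ k m = size ns1" using s(2) by simp
    ultimately obtain m' n' where "lsub k m ns1 m'" "lsub k n ns2 n'" using RApp.IH by blast
    then show "\<exists>m'. lsub k (RApp m n) ns m'" using s(1) by (auto intro: lsub_lsub_bag.app)
  qed
next
  case (RES m n)
  show ?case
  proof (intro allI impI)
    fix k and ns :: "rterm multiset" assume h: "occ k (RES m n) = size ns"
    then obtain ns1 ns2 where s: "ns = ns1 + ns2" "size ns1 = occ (Suc k) m"
      using mset_split_size[of "occ (Suc k) m" ns] by auto
    with h have s2: "size ns2 = occ k n" by simp
    have "occ (Suc k) m = size (image_mset (rlift 1 0) ns1)" using s(2) by simp
    with RES obtain m' where "lsub (Suc k) m (image_mset (rlift 1 0) ns1) m'" by blast
    moreover have "occ k n = size ns2" using s2 by simp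
    then obtain n' where "lsub k n ns2 n'" using RES.IH(2) by blast
    ultimately show "\<exists>m'. lsub k (RES m n) ns m'" using s(1) by (auto intro: lsub_es' lsub_lsub_bag.es)
  qed
next
  case (RDer m)
  show ?case
  proof (intro allI impI)
    fix k and ns :: "rterm multiset" assume "occ k (RDer m) = size ns"
    then obtain m' where "lsub k m ns m'" using RDer by auto
    then show "\<exists>m'. lsub k (RDer m) ns m'" by (blast intro: lsub_lsub_bag.der)
  qed
next
  case (RBag B)
  have "\<forall>ns::rterm multiset. sum_mset (image_mset (occ k) B') = size ns \<longrightarrow> (\<exists>B''. lsub_bag k B' ns B'')"
    if "set_mset B' \<subseteq> set_mset B" for k B'
    using that
  proof (induction B')
    case empty
    then show ?case by (auto intro: lsub_lsub_bag.bag_empty)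
  next
    case (add x B')
    show ?case
    proof (intro allI impI)
      fix ns :: "rterm multiset" assume h: "sum_mset (image_mset (occ k) (add_mset x B')) = size ns"
      then obtain ns1 ns2 where s: "ns = ns1 + ns2" "size ns1 = occ k x"
        using mset_split_size[of "occ k x" ns] by auto
      with h have s2: "size ns2 = sum_mset (image_mset (occ k) B')" by simp
      from add.prems have "x \<in># B" by auto
      moreover have "occ k x = size ns1" using s(2) by simp
      ultimately obtain x' where "lsub k x ns1 x'" using RBag by blast
      moreover have "set_mset B' \<subseteq> set_mset B" using add.prems by auto
      with add.IH s2 obtain B'' where "lsub_bag k B' ns2 B''" by (metis Ex_def)
      ultimately show "\<exists>B''. lsub_bag k (add_mset x B') ns B''" using s(1)
        by (auto intro: lsub_lsub_bag.bag_add)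
    qed
  qed
  note H = this
  show ?case
  proof (intro allI impI)
    fix k and ns :: "rterm multiset" assume "occ k (RBag B) = size ns"
    then have "sum_mset (image_mset (occ k) B) = size ns" by simp
    with H[of B k] obtain B'' where "lsub_bag k B ns B''" by blast
    then show "\<exists>m'. lsub k (RBag B) ns m'" by (blast intro: lsub_lsub_bag.bag)
  qed
qed


lemma rstep_lamS: "rstep m (Some b) \<Longrightarrow> rstep (RLam m) (Some (RLam b))"
  using c_lam by fastforce
lemma rstep_appLS: "rstep m (Some b) \<Longrightarrow> rstep (RApp m n) (Some (RApp b n))"
  using c_appL by fastforce
lemma rstep_appRS: "rstep n (Some b) \<Longrightarrow> rstep (RApp m n) (Some (RApp m b))"
  using c_appR by fastforce
lemma rstep_esLS: "rstep m (Some b) \<Longrightarrow> rstep (RES m n) (Some (RES b n))"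
  using c_esL by fastforce
lemma rstep_esRS: "rstep n (Some b) \<Longrightarrow> rstep (RES m n) (Some (RES m b))"
  using c_esR by fastforce
lemma rstep_bagS: "rstep m (Some b) \<Longrightarrow> rstep (RBag (add_mset m B)) (Some (RBag (add_mset b B)))"
  using c_bag by fastforce
lemma rstep_beta0: "rstep (RApp (RLam m) n) (Some (RES m n))"
  using beta[of "[]" m n] by simp
lemma rstep_subs0: "lsub 0 m B m' \<Longrightarrow> rstep (RES m (RBag B)) (Some m')"
  using subs[of "[]" m B m'] by simp
lemma rstep_subs_zero0: "occ 0 m \<noteq> size B \<Longrightarrow> rstep (RES m (RBag B)) None"
  using subs_zero[of m B "[]"] by simp

lemma tj_sr: "rstep a r \<Longrightarrow> (\<forall>\<Theta> A. tj \<Theta> a A \<longrightarrow> (\<exists>b. rstep a (Some b) \<and> tj \<Theta> b A)) \<and>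
   (\<forall>B \<Theta> I. a = RBag B \<longrightarrow> tjb \<Theta> B I \<longrightarrow> (\<exists>B'. rstep a (Some (RBag B')) \<and> tjb \<Theta> B' I))"
proof (induction a r rule: rstep.induct)
  case (beta ls m n)
  show ?case
  proof (intro conjI allI impI)
    fix \<Theta> A assume "tj \<Theta> (RApp (rplugL ls (RLam m)) n) A"
    then obtain \<Gamma>1 \<Delta> B I where h: "\<Theta> = \<Gamma>1 + \<Delta>" "n = RBag B" "tj \<Gamma>1 (rplugL ls (RLam m)) (Arr I A)" "tjb \<Delta> B I"
      by (auto simp: tj_App_iff)
    from tj_beta[OF h(3,4)] h(1,2) show "\<exists>b. rstep (RApp (rplugL ls (RLam m)) n) (Some b) \<and> tj \<Theta> b A"
      using rstep.beta[of ls m n] by auto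
  qed auto
next
  case (subs ls m B m')
  show ?case
  proof (intro conjI allI impI)
    fix \<Theta> A assume "tj \<Theta> (RES m (rplugL ls (RBag B))) A"
    then obtain \<Gamma> \<Delta> I where h: "\<Theta> = \<Gamma> + \<Delta>" "ls = []" "tj (ccons I \<Gamma>) m A" "tjb \<Delta> B I"
      by (auto simp: tj_ES_iff)
    have "tjb \<Delta> B (ccons I \<Gamma> 0)" using h(4) by simp
    from tj_subst(1)[OF h(3), rule_format, OF this] obtain m'' where "lsub 0 m B m''" "tj (cdel 0 (ccons I \<Gamma>) + \<Delta>) m'' A"
      by blast
    then show "\<exists>b. rstep (RES m (rplugL ls (RBag B))) (Some b) \<and> tj \<Theta> b A"
      using h by (auto simp: cdel_0_ccons intro: rstep_subs0)
  qed auto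
next
  case (subs_zero m B ls)
  show ?case
  proof (intro conjI allI impI)
    fix \<Theta> A assume "tj \<Theta> (RES m (rplugL ls (RBag B))) A"
    then obtain \<Gamma> \<Delta> I where h: "\<Theta> = \<Gamma> + \<Delta>" "ls = []" "tj (ccons I \<Gamma>) m A" "tjb \<Delta> B I"
      by (auto simp: tj_ES_iff)
    have "tjb \<Delta> B (ccons I \<Gamma> 0)" using h(4) by simp
    from tj_subst(1)[OF h(3), rule_format, OF this] obtain m'' where "lsub 0 m B m''" "tj (cdel 0 (ccons I \<Gamma>) + \<Delta>) m'' A"
      by blast
    then show "\<exists>b. rstep (RES m (rplugL ls (RBag B))) (Some b) \<and> tj \<Theta> b A"
      using h by (auto simp: cdel_0_ccons intro: rstep_subs0)
  qed auto
next
  case (c_lam m r)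
  show ?case
  proof (intro conjI allI impI)
    fix \<Theta> T assume "tj \<Theta> (RLam m) T"
    then obtain I A where h: "T = Arr I A" "tj (ccons I \<Theta>) m A" by (auto simp: tj_Lam_iff)
    with c_lam.IH obtain b where "rstep m (Some b)" "tj (ccons I \<Theta>) b A" by blast
    then show "\<exists>b. rstep (RLam m) (Some b) \<and> tj \<Theta> b T" using h(1) by (blast intro: rstep_lamS tlam)
  qed auto
next
  case (c_appL m r n)
  show ?case
  proof (intro conjI allI impI)
    fix \<Theta> A assume "tj \<Theta> (RApp m n) A"
    then obtain \<Gamma>1 \<Delta> B I where h: "\<Theta> = \<Gamma>1 + \<Delta>" "n = RBag B" "tj \<Gamma>1 m (Arr I A)" "tjb \<Delta> B I"
      by (auto simp: tj_App_iff)
    with c_appL.IH obtain b where "rstep m (Some b)" "tj \<Gamma>1 b (Arr I A)" by blast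
    then show "\<exists>b. rstep (RApp m n) (Some b) \<and> tj \<Theta> b A" using h by (blast intro: rstep_appLS tapp)
  qed auto
next
  case (c_appR n r m)
  show ?case
  proof (intro conjI allI impI)
    fix \<Theta> A assume "tj \<Theta> (RApp m n) A"
    then obtain \<Gamma>1 \<Delta> B I where h: "\<Theta> = \<Gamma>1 + \<Delta>" "n = RBag B" "tj \<Gamma>1 m (Arr I A)" "tjb \<Delta> B I"
      by (auto simp: tj_App_iff)
    with c_appR.IH obtain B' where "rstep n (Some (RBag B'))" "tjb \<Delta> B' I" by blast
    then show "\<exists>b. rstep (RApp m n) (Some b) \<and> tj \<Theta> b A" using h by (blast intro: rstep_appRS tapp)
  qed auto
next
  case (c_esL m r n)
  show ?case
  proof (intro conjI allI impI)
    fix \<Theta> A assume "tj \<Theta> (RES m n) A"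
    then obtain \<Gamma>1 \<Delta> B I where h: "\<Theta> = \<Gamma>1 + \<Delta>" "n = RBag B" "tj (ccons I \<Gamma>1) m A" "tjb \<Delta> B I"
      by (auto simp: tj_ES_iff)
    with c_esL.IH obtain b where "rstep m (Some b)" "tj (ccons I \<Gamma>1) b A" by blast
    then show "\<exists>b. rstep (RES m n) (Some b) \<and> tj \<Theta> b A" using h by (blast intro: rstep_esLS tes)
  qed auto
next
  case (c_esR n r m)
  show ?case
  proof (intro conjI allI impI)
    fix \<Theta> A assume "tj \<Theta> (RES m n) A"
    then obtain \<Gamma>1 \<Delta> B I where h: "\<Theta> = \<Gamma>1 + \<Delta>" "n = RBag B" "tj (ccons I \<Gamma>1) m A" "tjb \<Delta> B I"
      by (auto simp: tj_ES_iff)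
    with c_esR.IH obtain B' where "rstep n (Some (RBag B'))" "tjb \<Delta> B' I" by blast
    then show "\<exists>b. rstep (RES m n) (Some b) \<and> tj \<Theta> b A" using h by (blast intro: rstep_esRS tes)
  qed auto
next
  case (c_bag m r B)
  show ?case
  proof (intro conjI allI impI)
    fix B0 \<Theta> I assume e: "RBag (add_mset m B) = RBag B0" and t: "tjb \<Theta> B0 I"
    from e t have "tjb \<Theta> (add_mset m B) I" by simp
    from tjb_add_mset[OF this] obtain \<Gamma>1 \<Gamma>2 A I' where h: "tj \<Gamma>1 m A" "tjb \<Gamma>2 B I'" "I = add_mset A I'"
      "\<Theta> = \<Gamma>1 + \<Gamma>2" by blast
    with c_bag.IH obtain b where "rstep m (Some b)" "tj \<Gamma>1 b A" by blast
    then show "\<exists>B'. rstep (RBag (add_mset m B)) (Some (RBag B')) \<and> tjb \<Theta> B' I"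
      using h by (blast intro: rstep_bagS tbadd)
  qed auto
qed auto

lemma tj_exp: "rstep a r \<Longrightarrow> (\<forall>b. r = Some b \<longrightarrow> rwf a \<longrightarrow> (\<forall>\<Theta> A. tj \<Theta> b A \<longrightarrow> tj \<Theta> a A)) \<and>
   (\<forall>B b. a = RBag B \<longrightarrow> r = Some b \<longrightarrow> (\<forall>x\<in>#B. rwf x) \<longrightarrow>
      (\<forall>B' \<Theta> I. b = RBag B' \<longrightarrow> tjb \<Theta> B' I \<longrightarrow> tjb \<Theta> B I))"
proof (induction a r rule: rstep.induct)
  case (beta ls m n)
  show ?case
  proof (intro conjI allI impI)
    fix b \<Theta> A assume e: "Some (rplugL ls (RES m (rlift (length ls) 0 n))) = Some b"
      and w: "rwf (RApp (rplugL ls (RLam m)) n)" and t: "tj \<Theta> b A"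
    from w obtain Bn where n: "n = RBag Bn" by auto
    from e t n have "tj \<Theta> (rplugL ls (RES m (RBag (image_mset (rlift (length ls) 0) Bn)))) A" by simp
    from tj_unbeta[OF this] obtain \<Gamma>1 \<Delta> I where "\<Theta> = \<Gamma>1 + \<Delta>" "tj \<Gamma>1 (rplugL ls (RLam m)) (Arr I A)" "tjb \<Delta> Bn I"
      by blast
    then show "tj \<Theta> (RApp (rplugL ls (RLam m)) n) A" using n by (auto intro: tapp)
  qed auto
next
  case (subs ls m B m')
  show ?case
  proof (intro conjI allI impI)
    fix b \<Theta> A assume e: "Some (rplugL ls m') = Some b"
      and w: "rwf (RES m (rplugL ls (RBag B)))" and t: "tj \<Theta> b A"
    from w have ls: "ls = []" and wm: "rwf m" by auto
    with subs.hyps have l: "lsub 0 m B m'" by simp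
    from e t ls have "tj \<Theta> m' A" by simp
    with tj_unsubst(1)[OF l] wm obtain \<Gamma> \<Delta> where g: "tj \<Gamma> m A" "tjb \<Delta> B (\<Gamma> 0)" "\<Theta> = cdel 0 \<Gamma> + \<Delta>"
      by blast
    obtain \<Gamma>0 where g0: "\<Gamma> = ccons (\<Gamma> 0) \<Gamma>0" using ccons_split by blast
    then have "cdel 0 \<Gamma> = \<Gamma>0" by (metis cdel_0_ccons)
    then show "tj \<Theta> (RES m (rplugL ls (RBag B))) A" using g g0 ls by (metis tes rplugL.simps(1))
  qed auto
next
  case (c_lam m r)
  show ?case
  proof (intro conjI allI impI)
    fix b \<Theta> T assume e: "map_option RLam r = Some b" and w: "rwf (RLam m)" and t: "tj \<Theta> b T"
    from e obtain b0 where b: "r = Some b0" "b = RLam b0" by auto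
    from t b obtain I A where h: "T = Arr I A" "tj (ccons I \<Theta>) b0 A" by (auto simp: tj_Lam_iff)
    with c_lam.IH b w have "tj (ccons I \<Theta>) m A" by auto
    then show "tj \<Theta> (RLam m) T" using h by (auto intro: tlam)
  qed auto
next
  case (c_appL m r n)
  show ?case
  proof (intro conjI allI impI)
    fix b \<Theta> A assume e: "map_option (\<lambda>m'. RApp m' n) r = Some b" and w: "rwf (RApp m n)" and t: "tj \<Theta> b A"
    from e obtain b0 where b: "r = Some b0" "b = RApp b0 n" by auto
    from t b obtain \<Gamma>1 \<Delta> B I where h: "\<Theta> = \<Gamma>1 + \<Delta>" "n = RBag B" "tj \<Gamma>1 b0 (Arr I A)" "tjb \<Delta> B I"
      by (auto simp: tj_App_iff)
    with c_appL.IH b w have "tj \<Gamma>1 m (Arr I A)" by auto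
    then show "tj \<Theta> (RApp m n) A" using h by (auto intro: tapp)
  qed auto
next
  case (c_appR n r m)
  show ?case
  proof (intro conjI allI impI)
    fix b \<Theta> A assume e: "map_option (\<lambda>n'. RApp m n') r = Some b" and w: "rwf (RApp m n)" and t: "tj \<Theta> b A"
    from e obtain b0 where b: "r = Some b0" "b = RApp m b0" by auto
    from t b obtain \<Gamma>1 \<Delta> B I where h: "\<Theta> = \<Gamma>1 + \<Delta>" "b0 = RBag B" "tj \<Gamma>1 m (Arr I A)" "tjb \<Delta> B I"
      by (auto simp: tj_App_iff)
    from w obtain Bn where n: "n = RBag Bn" "\<forall>x\<in>#Bn. rwf x" by auto
    with c_appR.IH b h have "tjb \<Delta> Bn I" by blast
    then show "tj \<Theta> (RApp m n) A" using h n by (auto intro: tapp)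
  qed auto
next
  case (c_esL m r n)
  show ?case
  proof (intro conjI allI impI)
    fix b \<Theta> A assume e: "map_option (\<lambda>m'. RES m' n) r = Some b" and w: "rwf (RES m n)" and t: "tj \<Theta> b A"
    from e obtain b0 where b: "r = Some b0" "b = RES b0 n" by auto
    from t b obtain \<Gamma>1 \<Delta> B I where h: "\<Theta> = \<Gamma>1 + \<Delta>" "n = RBag B" "tj (ccons I \<Gamma>1) b0 A" "tjb \<Delta> B I"
      by (auto simp: tj_ES_iff)
    with c_esL.IH b w have "tj (ccons I \<Gamma>1) m A" by auto
    then show "tj \<Theta> (RES m n) A" using h by (auto intro: tes)
  qed auto
next
  case (c_esR n r m)
  show ?case
  proof (intro conjI allI impI)
    fix b \<Theta> A assume e: "map_option (\<lambda>n'. RES m n') r = Some b" and w: "rwf (RES m n)" and t: "tj \<Theta> b A"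
    from e obtain b0 where b: "r = Some b0" "b = RES m b0" by auto
    from t b obtain \<Gamma>1 \<Delta> B I where h: "\<Theta> = \<Gamma>1 + \<Delta>" "b0 = RBag B" "tj (ccons I \<Gamma>1) m A" "tjb \<Delta> B I"
      by (auto simp: tj_ES_iff)
    from w obtain Bn where n: "n = RBag Bn" "\<forall>x\<in>#Bn. rwf x" by auto
    with c_esR.IH b h have "tjb \<Delta> Bn I" by blast
    then show "tj \<Theta> (RES m n) A" using h n by (auto intro: tes)
  qed auto
next
  case (c_bag m r B)
  show ?case
  proof (intro conjI allI impI)
    fix B0 b B' \<Theta> I assume e1: "RBag (add_mset m B) = RBag B0"
      and e: "map_option (\<lambda>m'. RBag (add_mset m' B)) r = Some b" and w: "\<forall>x\<in>#B0. rwf x"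
      and e2: "b = RBag B'" and t: "tjb \<Theta> B' I"
    from e obtain b0 where b: "r = Some b0" "b = RBag (add_mset b0 B)" by auto
    from b e2 t have "tjb \<Theta> (add_mset b0 B) I" by simp
    from tjb_add_mset[OF this] obtain \<Gamma>1 \<Gamma>2 A I' where h: "tj \<Gamma>1 b0 A" "tjb \<Gamma>2 B I'" "I = add_mset A I'"
      "\<Theta> = \<Gamma>1 + \<Gamma>2" by blast
    from w e1 have "rwf m" by auto
    with c_bag.IH b h have "tj \<Gamma>1 m A" by blast
    then show "tjb \<Theta> B0 I" using h e1 by (auto intro: tbadd)
  qed auto
qed auto

lemma tj_exp_step: "rstep a (Some b) \<Longrightarrow> rwf a \<Longrightarrow> tj \<Theta> b A \<Longrightarrow> tj \<Theta> a A"
  using tj_exp by blast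

lemma good_exp: "rred\<^sup>*\<^sup>* a b \<Longrightarrow> rwf a \<Longrightarrow> tj \<Theta> b A \<Longrightarrow> tj \<Theta> a A"
proof (induction rule: converse_rtranclp_induct)
  case base
  then show ?case by blast
next
  case (step y z)
  then have "rwf z" using rstep_rwf by (auto simp: rred_def)
  with step show ?case by (auto simp: rred_def intro: tj_exp_step)
qed


lemma rnormal_lam: "rnormal (RLam m) \<Longrightarrow> rnormal m"
  unfolding rnormal_def using c_lam by blast
lemma rnormal_appL: "rnormal (RApp m n) \<Longrightarrow> rnormal m"
  unfolding rnormal_def using c_appL by blast
lemma rnormal_appR: "rnormal (RApp m n) \<Longrightarrow> rnormal n"
  unfolding rnormal_def using c_appR by blast
lemma rnormal_bag: "rnormal (RBag B) \<Longrightarrow> b \<in># B \<Longrightarrow> rnormal b"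
  unfolding rnormal_def using c_bag by (metis insert_DiffM)
lemma not_rnormal_beta: "\<not> rnormal (RApp (RLam m) n)"
  unfolding rnormal_def using rstep_beta0 by blast
lemma not_rnormal_es: "\<not> rnormal (RES m (RBag B))"
proof (cases "occ 0 m = size B")
  case True
  then obtain m' where "lsub 0 m B m'" using lsub_exists by blast
  then show ?thesis unfolding rnormal_def using rstep_subs0 by blast
next
  case False
  then show ?thesis unfolding rnormal_def using rstep_subs_zero0 by blast
qed

lemma nf_typable: "rwf p \<Longrightarrow> rnormal p \<Longrightarrow> (\<exists>\<Theta> A. tj \<Theta> p A) \<and> ((\<forall>m. p \<noteq> RLam m) \<longrightarrow> (\<forall>A. \<exists>\<Theta>. tj \<Theta> p A))"
proof (induction rule: rwf.induct)
  case (rwf_var x)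
  then show ?case by (auto intro: tvar)
next
  case (rwf_lam m)
  then obtain \<Theta> A where "tj \<Theta> m A" using rnormal_lam by blast
  then have "tj (ccons (\<Theta> 0) (\<lambda>i. \<Theta> (Suc i))) m A" by (simp add: ccons_eta)
  then show ?case by (blast intro: tlam)
next
  case (rwf_app m B)
  have nm: "rnormal m" using rwf_app.prems rnormal_appL by blast
  have nl: "\<forall>m0. m \<noteq> RLam m0" using rwf_app.prems not_rnormal_beta by blast
  have "\<forall>b\<in>#B. \<exists>\<Gamma> A. tj \<Gamma> b A"
  proof
    fix b assume "b \<in># B"
    moreover have "rnormal (RBag B)" using rwf_app.prems rnormal_appR by blast
    ultimately have "rnormal b" using rnormal_bag by blast
    with rwf_app.IH(2) \<open>b \<in># B\<close> show "\<exists>\<Gamma> A. tj \<Gamma> b A" by blast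
  qed
  then obtain \<Delta> I where d: "tjb \<Delta> B I" using tjb_build by blast
  have "\<forall>A. \<exists>\<Theta>. tj \<Theta> (RApp m (RBag B)) A"
  proof
    fix A
    from rwf_app.IH(1) nm nl obtain \<Gamma> where "tj \<Gamma> m (Arr I A)" by blast
    then show "\<exists>\<Theta>. tj \<Theta> (RApp m (RBag B)) A" using d by (blast intro: tapp)
  qed
  then show ?case by blast
next
  case (rwf_es m B)
  then show ?case using not_rnormal_es by blast
qed

lemma tj_normalizes: "tj \<Theta> m A \<Longrightarrow> \<exists>p. rred\<^sup>*\<^sup>* m p \<and> rnormal p"
proof (induction "rsz m" arbitrary: m \<Theta> A rule: less_induct)
  case less
  show ?case
  proof (cases "rnormal m")
    case True
    then show ?thesis by blast
  next
    case False
    then obtain r where "rstep m r" unfolding rnormal_def by blast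
    from tj_sr[OF this] less.prems obtain b where b: "rstep m (Some b)" "tj \<Theta> b A" by blast
    from rstep_rsz[OF b(1) refl] have "rsz b < rsz m" .
    from less.hyps[OF this b(2)] obtain p where "rred\<^sup>*\<^sup>* b p" "rnormal p" by blast
    moreover have "rred m b" using b(1) by (simp add: rred_def)
    ultimately show ?thesis by (meson converse_rtranclp_into_rtranclp)
  qed
qed


lemma taylor_DVar: "taylor_n m (DVar x) \<longleftrightarrow> m = RVar x"
  by (auto elim: taylor_n.cases intro: taylor_n.intros)
lemma taylor_DLam: "taylor_n m (DLam M) \<longleftrightarrow> (\<exists>m0. m = RLam m0 \<and> taylor_n m0 M)"
  by (auto elim: taylor_n.cases intro: taylor_n.intros)
lemma taylor_DApp: "taylor_n m (DApp M N) \<longleftrightarrow> (\<exists>m0 B. m = RApp m0 (RBag B) \<and> taylor_n m0 M \<and> (\<forall>b\<in>#B. taylor_n b N))"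
  by (auto elim: taylor_n.cases intro: taylor_n.intros)
lemma taylor_DES: "taylor_n m (DES M N) \<longleftrightarrow> (\<exists>m0 B. m = RES m0 (RBag B) \<and> taylor_n m0 M \<and> (\<forall>b\<in>#B. taylor_n b N))"
  by (auto elim: taylor_n.cases intro: taylor_n.intros)

lemma taylor_RVar: "taylor_n (RVar x) P \<longleftrightarrow> P = DVar x"
  by (auto elim: taylor_n.cases intro: taylor_n.intros)
lemma taylor_RLam: "taylor_n (RLam m) P \<longleftrightarrow> (\<exists>P0. P = DLam P0 \<and> taylor_n m P0)"
  by (auto elim: taylor_n.cases intro: taylor_n.intros)
lemma taylor_RApp: "taylor_n (RApp m n) P \<longleftrightarrow> (\<exists>P1 P2 B. P = DApp P1 P2 \<and> n = RBag B \<and> taylor_n m P1 \<and> (\<forall>b\<in>#B. taylor_n b P2))"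
  by (auto elim: taylor_n.cases intro: taylor_n.intros)
lemma taylor_RES: "taylor_n (RES m n) P \<longleftrightarrow> (\<exists>P1 P2 B. P = DES P1 P2 \<and> n = RBag B \<and> taylor_n m P1 \<and> (\<forall>b\<in>#B. taylor_n b P2))"
  by (auto elim: taylor_n.cases intro: taylor_n.intros)
lemma taylor_RDer[simp]: "\<not> taylor_n (RDer m) P"
  by (auto elim: taylor_n.cases)
lemma taylor_RBag[simp]: "\<not> taylor_n (RBag B) P"
  by (auto elim: taylor_n.cases)

lemma taylor_rwf: "taylor_n m M \<Longrightarrow> rwf m"
  by (induction rule: taylor_n.induct) auto

lemma taylor_rlift: "taylor_n m M \<Longrightarrow> taylor_n (rlift k c m) (dlift k c M)"
proof (induction m M arbitrary: c rule: taylor_n.induct)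
  case (var x)
  then show ?case by (auto intro: taylor_n.intros)
next
  case (lam m M)
  then show ?case by (auto intro: taylor_n.intros)
next
  case (app m M B N)
  then show ?case by (auto intro!: taylor_n.intros)
next
  case (es m M B N)
  then show ?case by (auto intro!: taylor_n.intros)
qed

lemma mset_choice: "(\<forall>b\<in>#B'. \<exists>b0. P b0 \<and> b = f b0) \<Longrightarrow> \<exists>B0. (\<forall>b0\<in>#B0. P b0) \<and> B' = image_mset f B0"
proof (induction B')
  case empty
  then show ?case by auto
next
  case (add x B')
  then obtain B0 where "\<forall>b0\<in>#B0. P b0" "B' = image_mset f B0" by auto
  moreover from add.prems obtain x0 where "P x0" "x = f x0" by auto
  ultimately show ?case by (intro exI[of _ "add_mset x0 B0"]) auto
qed

lemma taylor_unlift: "taylor_n m' (dlift k c M) \<Longrightarrow> \<exists>m. taylor_n m M \<and> m' = rlift k c m"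
proof (induction M arbitrary: m' c)
  case (DVar x)
  then show ?case by (auto simp: taylor_DVar intro: taylor_n.intros)
next
  case (DLam M)
  then obtain q where "m' = RLam q" "taylor_n q (dlift k (Suc c) M)" by (auto simp: taylor_DLam)
  with DLam.IH obtain q0 where "taylor_n q0 M" "q = rlift k (Suc c) q0" by blast
  then show ?case using \<open>m' = RLam q\<close> by (intro exI[of _ "RLam q0"]) (auto intro: taylor_n.intros)
next
  case (DApp M N)
  then obtain a B' where h: "m' = RApp a (RBag B')" "taylor_n a (dlift k c M)" "\<forall>b\<in>#B'. taylor_n b (dlift k c N)"
    by (auto simp: taylor_DApp)
  from DApp.IH(1)[OF h(2)] obtain a0 where a0: "taylor_n a0 M" "a = rlift k c a0" by blast
  have "\<forall>b\<in>#B'. \<exists>b0. taylor_n b0 N \<and> b = rlift k c b0" using h(3) DApp.IH(2) by blast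
  from mset_choice[OF this] obtain B0 where b0: "\<forall>b0\<in>#B0. taylor_n b0 N" "B' = image_mset (rlift k c) B0" by blast
  show ?case using a0 b0 h(1) by (intro exI[of _ "RApp a0 (RBag B0)"]) (auto intro: taylor_n.intros)
next
  case (DES M N)
  then obtain a B' where h: "m' = RES a (RBag B')" "taylor_n a (dlift k (Suc c) M)" "\<forall>b\<in>#B'. taylor_n b (dlift k c N)"
    by (auto simp: taylor_DES)
  from DES.IH(1)[OF h(2)] obtain a0 where a0: "taylor_n a0 M" "a = rlift k (Suc c) a0" by blast
  have "\<forall>b\<in>#B'. \<exists>b0. taylor_n b0 N \<and> b = rlift k c b0" using h(3) DES.IH(2) by blast
  from mset_choice[OF this] obtain B0 where b0: "\<forall>b0\<in>#B0. taylor_n b0 N" "B' = image_mset (rlift k c) B0" by blast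
  show ?case using a0 b0 h(1) by (intro exI[of _ "RES a0 (RBag B0)"]) (auto intro: taylor_n.intros)
qed

lemma taylor_subst:
  "lsub k p ns p' \<Longrightarrow> (\<forall>P N. taylor_n p P \<longrightarrow> (\<forall>n\<in>#ns. taylor_n n N) \<longrightarrow> taylor_n p' (dsubst P k N)) \<and>
     (\<forall>B. p = RBag B \<longrightarrow> (\<forall>P N. (\<forall>b\<in>#B. taylor_n b P) \<longrightarrow> (\<forall>n\<in>#ns. taylor_n n N) \<longrightarrow>
        (\<exists>B'. p' = RBag B' \<and> (\<forall>b\<in>#B'. taylor_n b (dsubst P k N)))))"
  "lsub_bag k B ns B' \<Longrightarrow> \<forall>P N. (\<forall>b\<in>#B. taylor_n b P) \<longrightarrow> (\<forall>n\<in>#ns. taylor_n n N) \<longrightarrow>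
     (\<forall>b\<in>#B'. taylor_n b (dsubst P k N))"
proof (induction rule: lsub_lsub_bag.inducts)
  case (var_eq k n)
  then show ?case by (auto simp: taylor_RVar)
next
  case (var_lt i k)
  then show ?case by (auto simp: taylor_RVar intro: taylor_n.intros)
next
  case (var_gt i k)
  then show ?case by (auto simp: taylor_RVar intro: taylor_n.intros)
next
  case (lam k m ns m')
  show ?case
  proof (intro conjI allI impI)
    fix P N assume t: "taylor_n (RLam m) P" and n: "\<forall>n\<in>#ns. taylor_n n N"
    from t obtain P0 where p: "P = DLam P0" "taylor_n m P0" by (auto simp: taylor_RLam)
    have "\<forall>n\<in>#image_mset (rlift 1 0) ns. taylor_n n (dlift 1 0 N)" using n by (auto intro: taylor_rlift)
    with lam.IH p(2) have "taylor_n m' (dsubst P0 (Suc k) (dlift 1 0 N))" by blast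
    then show "taylor_n (RLam m') (dsubst P k N)" using p(1) by (auto intro: taylor_n.intros)
  qed auto
next
  case (app k m ns1 m' n ns2 n')
  show ?case
  proof (intro conjI allI impI)
    fix P N assume t: "taylor_n (RApp m n) P" and ns: "\<forall>x\<in>#ns1 + ns2. taylor_n x N"
    from t obtain P1 P2 B where p: "P = DApp P1 P2" "n = RBag B" "taylor_n m P1" "\<forall>b\<in>#B. taylor_n b P2"
      by (auto simp: taylor_RApp)
    have "taylor_n m' (dsubst P1 k N)" using app.IH(1) p(3) ns by auto
    moreover have "\<forall>n\<in>#ns2. taylor_n n N" using ns by auto
    then obtain B' where "n' = RBag B'" "\<forall>b\<in>#B'. taylor_n b (dsubst P2 k N)"
      using app.IH(2) p(2,4) by blast
    ultimately show "taylor_n (RApp m' n') (dsubst P k N)" using p(1) by (auto intro: taylor_n.intros)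
  qed auto
next
  case (es k m ns1 m' n ns2 n')
  show ?case
  proof (intro conjI allI impI)
    fix P N assume t: "taylor_n (RES m n) P" and ns: "\<forall>x\<in>#ns1 + ns2. taylor_n x N"
    from t obtain P1 P2 B where p: "P = DES P1 P2" "n = RBag B" "taylor_n m P1" "\<forall>b\<in>#B. taylor_n b P2"
      by (auto simp: taylor_RES)
    have "\<forall>n\<in>#image_mset (rlift 1 0) ns1. taylor_n n (dlift 1 0 N)" using ns by (auto intro: taylor_rlift)
    with es.IH(1) p(3) have "taylor_n m' (dsubst P1 (Suc k) (dlift 1 0 N))" by blast
    moreover have "\<forall>n\<in>#ns2. taylor_n n N" using ns by auto
    then obtain B' where "n' = RBag B'" "\<forall>b\<in>#B'. taylor_n b (dsubst P2 k N)"
      using es.IH(2) p(2,4) by blast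
    ultimately show "taylor_n (RES m' n') (dsubst P k N)" using p(1) by (auto intro: taylor_n.intros)
  qed auto
next
  case (der k m ns m')
  then show ?case by auto
next
  case (bag k B ns B')
  then show ?case by auto
next
  case (bag_empty k)
  then show ?case by auto
next
  case (bag_add k m ns1 m' B ns2 B')
  then show ?case by auto
qed

lemma bag_collect:
  "(\<forall>b\<in>#B'. \<exists>p ns. taylor_n p P \<and> (\<forall>n\<in>#ns. taylor_n n N) \<and> lsub k p ns b) \<Longrightarrow>
   \<exists>B ns. (\<forall>p\<in>#B. taylor_n p P) \<and> (\<forall>n\<in>#ns. taylor_n n N) \<and> lsub_bag k B ns B'"
proof (induction B')
  case empty
  then show ?case by (intro exI[of _ "{#}"] exI[of _ "{#}"]) (auto intro: lsub_lsub_bag.bag_empty)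
next
  case (add x B')
  then obtain B ns where h: "\<forall>p\<in>#B. taylor_n p P" "\<forall>n\<in>#ns. taylor_n n N" "lsub_bag k B ns B'" by auto
  from add.prems obtain p ns1 where x: "taylor_n p P" "\<forall>n\<in>#ns1. taylor_n n N" "lsub k p ns1 x" by auto
  show ?case using h x
    by (intro exI[of _ "add_mset p B"] exI[of _ "ns1 + ns"]) (auto intro: lsub_lsub_bag.bag_add)
qed

lemma taylor_unsubst: "taylor_n m' (dsubst P k N) \<Longrightarrow>
  \<exists>p ns. taylor_n p P \<and> (\<forall>n\<in>#ns. taylor_n n N) \<and> lsub k p ns m'"
proof (induction P arbitrary: k N m')
  case (DVar i)
  consider "i = k" | "i < k" | "i > k" by linarith
  then show ?case
  proof cases
    case 1
    then show ?thesis using DVar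
      by (intro exI[of _ "RVar k"] exI[of _ "{#m'#}"]) (auto intro: taylor_n.intros lsub_lsub_bag.var_eq)
  next
    case 2
    then show ?thesis using DVar
      by (intro exI[of _ "RVar i"] exI[of _ "{#}"]) (auto simp: taylor_DVar intro: taylor_n.intros lsub_lsub_bag.var_lt)
  next
    case 3
    then show ?thesis using DVar
      by (intro exI[of _ "RVar i"] exI[of _ "{#}"]) (auto simp: taylor_DVar intro: taylor_n.intros lsub_var_gt')
  qed
next
  case (DLam P)
  then obtain q where q: "m' = RLam q" "taylor_n q (dsubst P (Suc k) (dlift 1 0 N))" by (auto simp: taylor_DLam)
  from DLam.IH[OF q(2)] obtain p ns' where h: "taylor_n p P" "\<forall>n\<in>#ns'. taylor_n n (dlift 1 0 N)"
    "lsub (Suc k) p ns' q" by blast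
  have "\<forall>b\<in>#ns'. \<exists>b0. taylor_n b0 N \<and> b = rlift 1 0 b0" using h(2) taylor_unlift by blast
  from mset_choice[OF this] obtain ns where n: "\<forall>b0\<in>#ns. taylor_n b0 N" "ns' = image_mset (rlift 1 0) ns" by blast
  show ?case using h n q(1)
    by (intro exI[of _ "RLam p"] exI[of _ ns]) (auto intro: taylor_n.intros lsub_lsub_bag.lam)
next
  case (DApp P1 P2)
  then obtain a B' where h: "m' = RApp a (RBag B')" "taylor_n a (dsubst P1 k N)" "\<forall>b\<in>#B'. taylor_n b (dsubst P2 k N)"
    by (auto simp: taylor_DApp)
  from DApp.IH(1)[OF h(2)] obtain p1 ns1 where a: "taylor_n p1 P1" "\<forall>n\<in>#ns1. taylor_n n N" "lsub k p1 ns1 a" by blast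
  have "\<forall>b\<in>#B'. \<exists>p ns. taylor_n p P2 \<and> (\<forall>n\<in>#ns. taylor_n n N) \<and> lsub k p ns b"
    using h(3) DApp.IH(2) by blast
  from bag_collect[OF this] obtain B ns2 where b: "\<forall>p\<in>#B. taylor_n p P2" "\<forall>n\<in>#ns2. taylor_n n N" "lsub_bag k B ns2 B'"
    by blast
  show ?case using a b h(1)
    by (intro exI[of _ "RApp p1 (RBag B)"] exI[of _ "ns1 + ns2"])
      (auto intro: taylor_n.intros lsub_lsub_bag.app lsub_lsub_bag.bag)
next
  case (DES P1 P2)
  then obtain a B' where h: "m' = RES a (RBag B')" "taylor_n a (dsubst P1 (Suc k) (dlift 1 0 N))" "\<forall>b\<in>#B'. taylor_n b (dsubst P2 k N)"
    by (auto simp: taylor_DES)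
  from DES.IH(1)[OF h(2)] obtain p1 ns1' where a: "taylor_n p1 P1" "\<forall>n\<in>#ns1'. taylor_n n (dlift 1 0 N)"
    "lsub (Suc k) p1 ns1' a" by blast
  have "\<forall>b\<in>#ns1'. \<exists>b0. taylor_n b0 N \<and> b = rlift 1 0 b0" using a(2) taylor_unlift by blast
  from mset_choice[OF this] obtain ns1 where n: "\<forall>b0\<in>#ns1. taylor_n b0 N" "ns1' = image_mset (rlift 1 0) ns1" by blast
  have "\<forall>b\<in>#B'. \<exists>p ns. taylor_n p P2 \<and> (\<forall>n\<in>#ns. taylor_n n N) \<and> lsub k p ns b"
    using h(3) DES.IH(2) by blast
  from bag_collect[OF this] obtain B ns2 where b: "\<forall>p\<in>#B. taylor_n p P2" "\<forall>n\<in>#ns2. taylor_n n N" "lsub_bag k B ns2 B'"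
    by blast
  show ?case using a b h(1) n
    by (intro exI[of _ "RES p1 (RBag B)"] exI[of _ "ns1 + ns2"])
      (auto intro: taylor_n.intros lsub_lsub_bag.es lsub_lsub_bag.bag)
qed


definition TL :: "rterm \<Rightarrow> dterm \<Rightarrow> bool" where
  "TL l L \<longleftrightarrow> (\<exists>B. l = RBag B \<and> (\<forall>b\<in>#B. taylor_n b L))"

lemma taylor_dplugL_inv: "taylor_n m' (dplugL Ls X) \<Longrightarrow>
  \<exists>ls x. m' = rplugL ls x \<and> list_all2 TL ls Ls \<and> taylor_n x X"
proof (induction Ls arbitrary: m')
  case Nil
  then show ?case by (intro exI[of _ "[]"] exI[of _ m']) auto
next
  case (Cons L Ls)
  from Cons.prems obtain a B where h: "m' = RES a (RBag B)" "taylor_n a (dplugL Ls X)" "\<forall>b\<in>#B. taylor_n b L"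
    by (auto simp: taylor_DES)
  from Cons.IH[OF h(2)] obtain ls x where "a = rplugL ls x" "list_all2 TL ls Ls" "taylor_n x X" by blast
  moreover have "TL (RBag B) L" using h(3) by (simp add: TL_def)
  ultimately show ?case using h(1) by (intro exI[of _ "RBag B # ls"] exI[of _ x]) auto
qed

lemma taylor_dplugL: "list_all2 TL ls Ls \<Longrightarrow> taylor_n x X \<Longrightarrow> taylor_n (rplugL ls x) (dplugL Ls X)"
proof (induction ls Ls rule: list_all2_induct)
  case Nil
  then show ?case by simp
next
  case (Cons l ls L Ls)
  then show ?case by (auto simp: TL_def intro: taylor_n.intros)
qed

lemma rred_ctx: "(\<And>x y. rred x y \<Longrightarrow> rred (f x) (f y)) \<Longrightarrow> rred\<^sup>*\<^sup>* a b \<Longrightarrow> rred\<^sup>*\<^sup>* (f a) (f b)"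
proof -
  assume h: "\<And>x y. rred x y \<Longrightarrow> rred (f x) (f y)"
  show "rred\<^sup>*\<^sup>* a b \<Longrightarrow> rred\<^sup>*\<^sup>* (f a) (f b)"
    by (induction rule: rtranclp_induct) (auto intro: h rtranclp.rtrancl_into_rtrancl)
qed

lemma rred_lam: "rred\<^sup>*\<^sup>* a b \<Longrightarrow> rred\<^sup>*\<^sup>* (RLam a) (RLam b)"
  by (rule rred_ctx[where f = RLam]) (auto simp: rred_def intro: rstep_lamS)
lemma rred_appL: "rred\<^sup>*\<^sup>* a b \<Longrightarrow> rred\<^sup>*\<^sup>* (RApp a n) (RApp b n)"
  by (rule rred_ctx[where f = "\<lambda>x. RApp x n"]) (auto simp: rred_def intro: rstep_appLS)
lemma rred_appR: "rred\<^sup>*\<^sup>* a b \<Longrightarrow> rred\<^sup>*\<^sup>* (RApp m a) (RApp m b)"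
  by (rule rred_ctx[where f = "\<lambda>x. RApp m x"]) (auto simp: rred_def intro: rstep_appRS)
lemma rred_esL: "rred\<^sup>*\<^sup>* a b \<Longrightarrow> rred\<^sup>*\<^sup>* (RES a n) (RES b n)"
  by (rule rred_ctx[where f = "\<lambda>x. RES x n"]) (auto simp: rred_def intro: rstep_esLS)
lemma rred_esR: "rred\<^sup>*\<^sup>* a b \<Longrightarrow> rred\<^sup>*\<^sup>* (RES m a) (RES m b)"
  by (rule rred_ctx[where f = "\<lambda>x. RES m x"]) (auto simp: rred_def intro: rstep_esRS)
lemma rred_bag: "rred\<^sup>*\<^sup>* a b \<Longrightarrow> rred\<^sup>*\<^sup>* (RBag (add_mset a C)) (RBag (add_mset b C))"
  by (rule rred_ctx[where f = "\<lambda>x. RBag (add_mset x C)"]) (auto simp: rred_def intro: rstep_bagS)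

lemma bag_collect_rred:
  "(\<forall>b'\<in>#B'. \<exists>b. taylor_n b N \<and> rred\<^sup>*\<^sup>* b b') \<Longrightarrow>
   \<exists>B. (\<forall>b\<in>#B. taylor_n b N) \<and> (\<forall>C. rred\<^sup>*\<^sup>* (RBag (B + C)) (RBag (B' + C)))"
proof (induction B')
  case empty
  then show ?case by (intro exI[of _ "{#}"]) auto
next
  case (add x B')
  then obtain B where h: "\<forall>b\<in>#B. taylor_n b N" "\<forall>C. rred\<^sup>*\<^sup>* (RBag (B + C)) (RBag (B' + C))" by auto
  from add.prems obtain b where b: "taylor_n b N" "rred\<^sup>*\<^sup>* b x" by auto
  have "\<forall>C. rred\<^sup>*\<^sup>* (RBag (add_mset b B + C)) (RBag (add_mset x B' + C))"
  proof
    fix C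
    have "rred\<^sup>*\<^sup>* (RBag (add_mset b (B + C))) (RBag (add_mset x (B + C)))" using rred_bag[OF b(2)] .
    moreover have "rred\<^sup>*\<^sup>* (RBag (B + add_mset x C)) (RBag (B' + add_mset x C))" using h(2) by blast
    ultimately show "rred\<^sup>*\<^sup>* (RBag (add_mset b B + C)) (RBag (add_mset x B' + C))" by simp
  qed
  then show ?case using h(1) b(1) by (intro exI[of _ "add_mset b B"]) auto
qed

lemma bag_collect_rred0:
  "(\<forall>b'\<in>#B'. \<exists>b. taylor_n b N \<and> rred\<^sup>*\<^sup>* b b') \<Longrightarrow>
   \<exists>B. (\<forall>b\<in>#B. taylor_n b N) \<and> rred\<^sup>*\<^sup>* (RBag B) (RBag B')"
  using bag_collect_rred[of B' N] by (metis add_0_right)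

lemma anti_red: "nstep M M' \<Longrightarrow> taylor_n m' M' \<Longrightarrow> \<exists>m. taylor_n m M \<and> rred\<^sup>*\<^sup>* m m'"
proof (induction M M' arbitrary: m' rule: nstep.induct)
  case (dB Ls M N)
  from taylor_dplugL_inv[OF dB] obtain ls x where h: "m' = rplugL ls x" "list_all2 TL ls Ls"
    "taylor_n x (DES M (dlift (length Ls) 0 N))" by blast
  from h(3) obtain p B' where x: "x = RES p (RBag B')" "taylor_n p M" "\<forall>b\<in>#B'. taylor_n b (dlift (length Ls) 0 N)"
    by (auto simp: taylor_DES)
  have "\<forall>b\<in>#B'. \<exists>b0. taylor_n b0 N \<and> b = rlift (length Ls) 0 b0" using x(3) taylor_unlift by blast
  from mset_choice[OF this] obtain B0 where b0: "\<forall>b0\<in>#B0. taylor_n b0 N" "B' = image_mset (rlift (length Ls) 0) B0"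
    by blast
  have len: "length ls = length Ls" using h(2) list_all2_lengthD by blast
  have "taylor_n (RLam p) (DLam M)" using x(2) by (rule taylor_n.lam)
  then have "taylor_n (RApp (rplugL ls (RLam p)) (RBag B0)) (DApp (dplugL Ls (DLam M)) N)"
    using taylor_dplugL[OF h(2)] b0(1) by (auto intro: taylor_n.app)
  moreover have "rred (RApp (rplugL ls (RLam p)) (RBag B0)) m'"
    using rstep.beta[of ls p "RBag B0"] h(1) x(1) b0(2) len by (simp add: rred_def)
  ultimately show ?case by blast
next
  case (ls M N)
  from taylor_unsubst[OF ls] obtain p ns where h: "taylor_n p M" "\<forall>n\<in>#ns. taylor_n n N" "lsub 0 p ns m'" by blast
  have "taylor_n (RES p (RBag ns)) (DES M N)" using h by (auto intro: taylor_n.es)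
  moreover have "rred (RES p (RBag ns)) m'" using rstep_subs0[OF h(3)] by (simp add: rred_def)
  ultimately show ?case by blast
next
  case (lam M M')
  then obtain q where "m' = RLam q" "taylor_n q M'" by (auto simp: taylor_DLam)
  with lam.IH obtain q0 where "taylor_n q0 M" "rred\<^sup>*\<^sup>* q0 q" by blast
  then show ?case using \<open>m' = RLam q\<close> by (blast intro: taylor_n.lam rred_lam)
next
  case (appL M M' N)
  then obtain a B where h: "m' = RApp a (RBag B)" "taylor_n a M'" "\<forall>b\<in>#B. taylor_n b N" by (auto simp: taylor_DApp)
  with appL.IH obtain a0 where "taylor_n a0 M" "rred\<^sup>*\<^sup>* a0 a" by blast
  then show ?case using h by (blast intro: taylor_n.app rred_appL)
next
  case (appR N N' M)
  then obtain a B where h: "m' = RApp a (RBag B)" "taylor_n a M" "\<forall>b\<in>#B. taylor_n b N'" by (auto simp: taylor_DApp)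
  have "\<forall>b'\<in>#B. \<exists>b. taylor_n b N \<and> rred\<^sup>*\<^sup>* b b'" using h(3) appR.IH by blast
  from bag_collect_rred0[OF this] obtain B0 where "\<forall>b\<in>#B0. taylor_n b N" "rred\<^sup>*\<^sup>* (RBag B0) (RBag B)" by blast
  then show ?case using h by (blast intro: taylor_n.app rred_appR)
next
  case (esL M M' N)
  then obtain a B where h: "m' = RES a (RBag B)" "taylor_n a M'" "\<forall>b\<in>#B. taylor_n b N" by (auto simp: taylor_DES)
  with esL.IH obtain a0 where "taylor_n a0 M" "rred\<^sup>*\<^sup>* a0 a" by blast
  then show ?case using h by (blast intro: taylor_n.es rred_esL)
next
  case (esR N N' M)
  then obtain a B where h: "m' = RES a (RBag B)" "taylor_n a M" "\<forall>b\<in>#B. taylor_n b N'" by (auto simp: taylor_DES)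
  have "\<forall>b'\<in>#B. \<exists>b. taylor_n b N \<and> rred\<^sup>*\<^sup>* b b'" using h(3) esR.IH by blast
  from bag_collect_rred0[OF this] obtain B0 where "\<forall>b\<in>#B0. taylor_n b N" "rred\<^sup>*\<^sup>* (RBag B0) (RBag B)" by blast
  then show ?case using h by (blast intro: taylor_n.es rred_esR)
qed

definition goodT :: "dterm \<Rightarrow> bool" where
  "goodT M \<longleftrightarrow> (\<exists>t \<Theta> A. taylor_n t M \<and> tj \<Theta> t A)"

lemma goodT_back: "nstep\<^sup>*\<^sup>* X Y \<Longrightarrow> goodT Y \<Longrightarrow> goodT X"
proof (induction rule: converse_rtranclp_induct)
  case base
  then show ?case .
next
  case (step X Z)
  then obtain t \<Theta> A where t: "taylor_n t Z" "tj \<Theta> t A" by (auto simp: goodT_def)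
  from anti_red[OF step(1) t(1)] obtain m where m: "taylor_n m X" "rred\<^sup>*\<^sup>* m t" by blast
  have "tj \<Theta> m A" using good_exp[OF m(2) taylor_rwf[OF m(1)] t(2)] .
  then show ?case using m(1) by (auto simp: goodT_def)
qed

lemma goodT_tplug: "goodT (tplug T M) \<Longrightarrow> goodT M"
proof (induction T)
  case THole
  then show ?case by simp
next
  case (TApp T N)
  from TApp.prems obtain m0 \<Gamma> I A where "taylor_n m0 (tplug T M)" "tj \<Gamma> m0 (Arr I A)"
    by (auto simp: goodT_def taylor_DApp tj_App_iff)
  then have "goodT (tplug T M)" by (auto simp: goodT_def)
  then show ?case by (rule TApp.IH)
next
  case (TLamApp T N)
  from TLamApp.prems obtain m0 \<Gamma> I A where "taylor_n m0 (tplug T M)" "tj \<Gamma> m0 A"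
    by (auto simp: goodT_def taylor_DApp taylor_DLam tj_App_iff tj_Lam_iff)
  then have "goodT (tplug T M)" by (auto simp: goodT_def)
  then show ?case by (rule TLamApp.IH)
qed

lemma goodT_I: "goodT (DLam (DVar 0))"
proof -
  have "tj (ccons {#Atom#} 0) (RVar 0) Atom"
  proof -
    have "ccons {#Atom#} 0 = single 0 Atom"
      by (rule ext) (auto simp: ccons_def single_def zero_fun_apply split: nat.splits)
    then show ?thesis by (simp add: tvar)
  qed
  then have "tj 0 (RLam (RVar 0)) (Arr {#Atom#} Atom)" by (rule tlam)
  then show ?thesis unfolding goodT_def by (blast intro: taylor_n.intros)
qed

theorem dirA: "dCBN_meaningful M \<Longrightarrow> nf_set (Taylor_n M) \<noteq> {}"
proof -
  assume "dCBN_meaningful M"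
  then obtain T where "nstep\<^sup>*\<^sup>* (tplug T M) (DLam (DVar 0))" by (auto simp: dCBN_meaningful_def)
  from goodT_back[OF this goodT_I] have "goodT M" by (rule goodT_tplug)
  then obtain t \<Theta> A where t: "taylor_n t M" "tj \<Theta> t A" by (auto simp: goodT_def)
  from tj_normalizes[OF t(2)] obtain p where "rred\<^sup>*\<^sup>* t p" "rnormal p" by blast
  then have "p \<in> nf_set (Taylor_n M)" using t(1) by (auto simp: nf_set_def Taylor_n_def)
  then show ?thesis by blast
qed


inductive hstep :: "dterm \<Rightarrow> dterm \<Rightarrow> bool" where
  hB: "hstep (DApp (DLam P) N) (DES P N)"
| hS: "hstep (DES P N) (dsubst P 0 N)"
| hL: "hstep M M' \<Longrightarrow> hstep (DLam M) (DLam M')"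
| hA: "hstep M M' \<Longrightarrow> hstep (DApp M N) (DApp M' N)"

lemma nstep_beta0: "nstep (DApp (DLam P) N) (DES P N)"
  using nstep.dB[of "[]" P N] by simp

lemma hstep_nstep: "hstep M M' \<Longrightarrow> nstep M M'"
  by (induction rule: hstep.induct) (auto intro: nstep_beta0 nstep.intros)

lemma hstep_sim: "hstep M M' \<Longrightarrow> taylor_n m M \<Longrightarrow> tj \<Theta> m A \<Longrightarrow>
  \<exists>m'. taylor_n m' M' \<and> tj \<Theta> m' A \<and> rstep m (Some m')"
proof (induction M M' arbitrary: m \<Theta> A rule: hstep.induct)
  case (hB P N)
  from hB.prems(1) obtain p B where h: "m = RApp (RLam p) (RBag B)" "taylor_n p P" "\<forall>b\<in>#B. taylor_n b N"
    by (auto simp: taylor_DApp taylor_DLam)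
  from hB.prems(2) h(1) obtain \<Gamma> \<Delta> I where t: "\<Theta> = \<Gamma> + \<Delta>" "tj (ccons I \<Gamma>) p A" "tjb \<Delta> B I"
    by (auto simp: tj_App_iff tj_Lam_iff)
  have "tj \<Theta> (RES p (RBag B)) A" using t by (auto intro: tes)
  moreover have "taylor_n (RES p (RBag B)) (DES P N)" using h by (auto intro: taylor_n.es)
  moreover have "rstep m (Some (RES p (RBag B)))" using h(1) rstep_beta0 by simp
  ultimately show ?case by blast
next
  case (hS P N)
  from hS.prems(1) obtain p B where h: "m = RES p (RBag B)" "taylor_n p P" "\<forall>b\<in>#B. taylor_n b N"
    by (auto simp: taylor_DES)
  from hS.prems(2) h(1) obtain \<Gamma> \<Delta> I where t: "\<Theta> = \<Gamma> + \<Delta>" "tj (ccons I \<Gamma>) p A" "tjb \<Delta> B I"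
    by (auto simp: tj_ES_iff)
  have "tjb \<Delta> B (ccons I \<Gamma> 0)" using t(3) by simp
  from tj_subst(1)[OF t(2), rule_format, OF this] obtain m' where m': "lsub 0 p B m'"
    "tj (cdel 0 (ccons I \<Gamma>) + \<Delta>) m' A" by blast
  have "taylor_n m' (dsubst P 0 N)" using taylor_subst(1)[OF m'(1)] h(2,3) by blast
  moreover have "tj \<Theta> m' A" using m'(2) t(1) by (simp add: cdel_0_ccons)
  moreover have "rstep m (Some m')" using h(1) rstep_subs0[OF m'(1)] by simp
  ultimately show ?case by blast
next
  case (hL M M')
  from hL.prems(1) obtain q where q: "m = RLam q" "taylor_n q M" by (auto simp: taylor_DLam)
  from hL.prems(2) q(1) obtain I B where t: "A = Arr I B" "tj (ccons I \<Theta>) q B" by (auto simp: tj_Lam_iff)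
  from hL.IH[OF q(2) t(2)] obtain q' where "taylor_n q' M'" "tj (ccons I \<Theta>) q' B" "rstep q (Some q')" by blast
  then show ?case using q t by (blast intro: taylor_n.lam tlam rstep_lamS)
next
  case (hA M M' N)
  from hA.prems(1) obtain a B where h: "m = RApp a (RBag B)" "taylor_n a M" "\<forall>b\<in>#B. taylor_n b N"
    by (auto simp: taylor_DApp)
  from hA.prems(2) h(1) obtain \<Gamma> \<Delta> I where t: "\<Theta> = \<Gamma> + \<Delta>" "tj \<Gamma> a (Arr I A)" "tjb \<Delta> B I"
    by (auto simp: tj_App_iff)
  from hA.IH[OF h(2) t(2)] obtain a' where "taylor_n a' M'" "tj \<Gamma> a' (Arr I A)" "rstep a (Some a')" by blast
  then show ?case using h t by (blast intro: taylor_n.app tapp rstep_appLS)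
qed

definition lams :: "nat \<Rightarrow> dterm \<Rightarrow> dterm" where "lams n X = (DLam ^^ n) X"
definition apps :: "dterm \<Rightarrow> dterm list \<Rightarrow> dterm" where "apps H Ns = foldl DApp H Ns"

lemma lams_0[simp]: "lams 0 X = X" by (simp add: lams_def)
lemma lams_Suc[simp]: "lams (Suc n) X = DLam (lams n X)" by (simp add: lams_def)
lemma apps_Nil[simp]: "apps H [] = H" by (simp add: apps_def)
lemma apps_Cons[simp]: "apps H (N # Ns) = apps (DApp H N) Ns" by (simp add: apps_def)
lemma apps_snoc: "apps H (Ns @ [N]) = DApp (apps H Ns) N" by (simp add: apps_def)

definition hnf :: "dterm \<Rightarrow> bool" where
  "hnf M \<longleftrightarrow> (\<exists>n j Ns. M = lams n (apps (DVar j) Ns))"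

lemma progress: "hnf M \<or> (\<exists>M'. hstep M M')"
proof (induction M)
  case (DVar x)
  have "DVar x = lams 0 (apps (DVar x) [])" by simp
  then show ?case unfolding hnf_def by blast
next
  case (DLam M)
  then show ?case
  proof
    assume "hnf M"
    then obtain n j Ns where "M = lams n (apps (DVar j) Ns)" by (auto simp: hnf_def)
    then have "DLam M = lams (Suc n) (apps (DVar j) Ns)" by simp
    then show ?case unfolding hnf_def by blast
  next
    assume "\<exists>M'. hstep M M'"
    then show ?case by (blast intro: hL)
  qed
next
  case (DApp M N)
  from DApp.IH(1) show ?case
  proof
    assume "hnf M"
    then obtain n j Ns where e: "M = lams n (apps (DVar j) Ns)" by (auto simp: hnf_def)
    show ?case
    proof (cases n)
      case 0
      then have "DApp M N = lams 0 (apps (DVar j) (Ns @ [N]))" using e by (simp add: apps_snoc)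
      then show ?thesis unfolding hnf_def by blast
    next
      case (Suc n')
      then show ?thesis using e by (auto intro: hB)
    qed
  next
    assume "\<exists>M'. hstep M M'"
    then show ?case by (blast intro: hA)
  qed
next
  case (DES M N)
  then show ?case by (blast intro: hS)
qed

lemma nstep_tplug: "nstep M M' \<Longrightarrow> nstep (tplug T M) (tplug T M')"
  by (induction T) (auto intro: nstep.intros)

lemma nsteps_tplug: "nstep\<^sup>*\<^sup>* M M' \<Longrightarrow> nstep\<^sup>*\<^sup>* (tplug T M) (tplug T M')"
  by (induction rule: rtranclp_induct) (auto intro: nstep_tplug rtranclp.rtrancl_into_rtrancl)

lemma meaningful_back: "nstep\<^sup>*\<^sup>* M M' \<Longrightarrow> dCBN_meaningful M' \<Longrightarrow> dCBN_meaningful M"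
  unfolding dCBN_meaningful_def using nsteps_tplug rtranclp_trans by metis

primrec tcomp :: "tctx \<Rightarrow> tctx \<Rightarrow> tctx" where
  "tcomp THole S = S"
| "tcomp (TApp T N) S = TApp (tcomp T S) N"
| "tcomp (TLamApp T N) S = TLamApp (tcomp T S) N"

lemma tplug_tcomp: "tplug (tcomp T S) M = tplug T (tplug S M)"
  by (induction T) auto

lemma meaningful_ctx: "dCBN_meaningful (tplug S M) \<Longrightarrow> dCBN_meaningful M"
  unfolding dCBN_meaningful_def by (metis tplug_tcomp)

lemma beta_subst: "nstep\<^sup>*\<^sup>* (DApp (DLam M) Z) (dsubst M 0 Z)"
  using nstep_beta0[of M Z] nstep.ls[of M Z] by auto

lemma meaningful_free: "dCBN_meaningful (dsubst M 0 Z) \<Longrightarrow> dCBN_meaningful M"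
proof -
  assume "dCBN_meaningful (dsubst M 0 Z)"
  then have "dCBN_meaningful (DApp (DLam M) Z)" by (rule meaningful_back[OF beta_subst])
  then have "dCBN_meaningful (tplug (TLamApp THole Z) M)" by simp
  then show ?thesis by (rule meaningful_ctx)
qed

lemma meaningful_lam: "dCBN_meaningful (dsubst M 0 Z) \<Longrightarrow> dCBN_meaningful (DLam M)"
proof -
  assume "dCBN_meaningful (dsubst M 0 Z)"
  then have "dCBN_meaningful (DApp (DLam M) Z)" by (rule meaningful_back[OF beta_subst])
  then have "dCBN_meaningful (tplug (TApp THole Z) (DLam M))" by simp
  then show ?thesis by (rule meaningful_ctx)
qed

lemma dsubst_lams: "dsubst (lams m X) d N = lams m (dsubst X (d + m) ((dlift 1 0 ^^ m) N))"
proof (induction m arbitrary: d N)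
  case 0
  then show ?case by simp
next
  case (Suc m)
  show ?case by (simp add: Suc funpow_Suc_right del: funpow.simps)
qed

lemma dsubst_apps: "dsubst (apps H Ns) d N = apps (dsubst H d N) (map (\<lambda>x. dsubst x d N) Ns)"
  by (induction Ns arbitrary: H) auto

definition Ok :: "nat \<Rightarrow> dterm" where "Ok k = lams (Suc k) (DVar 0)"

lemma dsubst_Ok[simp]: "dsubst (Ok k) d N = Ok k"
  unfolding Ok_def by (simp only: dsubst_lams) simp

lemma dlift_lams: "dlift a c (lams m X) = lams m (dlift a (c + m) X)"
  by (induction m arbitrary: c) auto

lemma dlift_Ok[simp]: "dlift a c (Ok k) = Ok k"
  unfolding Ok_def by (simp only: dlift_lams) simp

lemma funpow_dlift_Ok[simp]: "(dlift 1 0 ^^ m) (Ok k) = Ok k"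
  by (induction m) auto

lemma funpow_dlift_Ok'[simp]: "(dlift (Suc 0) 0 ^^ m) (Ok k) = Ok k"
  by (induction m) auto

lemma nsteps_apps: "nstep\<^sup>*\<^sup>* a b \<Longrightarrow> nstep\<^sup>*\<^sup>* (apps a Ns) (apps b Ns)"
proof (induction Ns arbitrary: a b)
  case Nil
  then show ?case by simp
next
  case (Cons N Ns)
  have "nstep\<^sup>*\<^sup>* (DApp a N) (DApp b N)" using Cons.prems
    by (induction rule: rtranclp_induct) (auto intro: nstep.appL rtranclp.rtrancl_into_rtrancl)
  then show ?case using Cons.IH by simp
qed

lemma apps_Ok: "length Ns = k \<Longrightarrow> nstep\<^sup>*\<^sup>* (apps (Ok k) Ns) (DLam (DVar 0))"
proof (induction Ns arbitrary: k)
  case Nil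
  then show ?case by (simp add: Ok_def)
next
  case (Cons N Ns)
  then obtain k' where k: "k = Suc k'" "length Ns = k'" by auto
  have "Ok k = DLam (Ok k')" unfolding Ok_def using k(1) by simp
  then have "nstep\<^sup>*\<^sup>* (DApp (Ok k) N) (dsubst (Ok k') 0 N)" using beta_subst[of "Ok k'" N] by simp
  then have "nstep\<^sup>*\<^sup>* (apps (Ok k) (N # Ns)) (apps (Ok k') Ns)" using nsteps_apps by fastforce
  then show ?case using Cons.IH[OF k(2)] by (meson rtranclp_trans)
qed

lemma meaningful_Q: "dCBN_meaningful (lams n (apps (Ok (length Ns)) Ns))"
proof (induction n arbitrary: Ns)
  case 0
  have "nstep\<^sup>*\<^sup>* (tplug THole (apps (Ok (length Ns)) Ns)) (DLam (DVar 0))" using apps_Ok by simp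
  then show ?case unfolding dCBN_meaningful_def by (metis lams_0)
next
  case (Suc n)
  let ?Ns' = "map (\<lambda>x. dsubst x n (Ok 0)) Ns"
  have "dsubst (lams n (apps (Ok (length Ns)) Ns)) 0 (Ok 0) = lams n (apps (Ok (length ?Ns')) ?Ns')"
    by (simp add: dsubst_lams dsubst_apps)
  then have "dCBN_meaningful (dsubst (lams n (apps (Ok (length Ns)) Ns)) 0 (Ok 0))" using Suc.IH by metis
  then show ?case using meaningful_lam by simp
qed

lemma meaningful_P: "\<forall>n j Ns. n + j = s \<longrightarrow> dCBN_meaningful (lams n (apps (DVar j) Ns))"
proof (induction s rule: less_induct)
  case (less s)
  show ?case
  proof (intro allI impI)
    fix n j and Ns :: "dterm list" assume s: "n + j = s"
    let ?O = "Ok (length Ns)"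
    let ?Ns' = "map (\<lambda>x. dsubst x n ?O) Ns"
    show "dCBN_meaningful (lams n (apps (DVar j) Ns))"
    proof (cases n)
      case 0
      let ?Ns0 = "map (\<lambda>x. dsubst x 0 ?O) Ns"
      have e: "dsubst (apps (DVar j) Ns) 0 ?O = apps (dsubst (DVar j) 0 ?O) ?Ns0" by (simp add: dsubst_apps)
      have "dCBN_meaningful (apps (dsubst (DVar j) 0 ?O) ?Ns0)"
      proof (cases j)
        case 0
        then show ?thesis using meaningful_Q[of 0 ?Ns0] by simp
      next
        case (Suc j')
        then have lt: "j' < s" using s \<open>n = 0\<close> by simp
        have "dCBN_meaningful (lams 0 (apps (DVar j') ?Ns0))" using less.IH[OF lt, rule_format, of 0 j' ?Ns0] by simp
        then show ?thesis using Suc by simp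
      qed
      then show ?thesis using e meaningful_free \<open>n = 0\<close> by (metis lams_0)
    next
      case (Suc n')
      let ?Ns1 = "map (\<lambda>x. dsubst x n' ?O) Ns"
      have e: "dsubst (lams n' (apps (DVar j) Ns)) 0 ?O = lams n' (apps (dsubst (DVar j) n' ?O) ?Ns1)"
        by (simp add: dsubst_lams dsubst_apps)
      have "dCBN_meaningful (lams n' (apps (dsubst (DVar j) n' ?O) ?Ns1))"
      proof -
        consider "j < n'" | "j = n'" | "j > n'" by linarith
        then show ?thesis
        proof cases
          case 1
          have lt: "n' + j < s" using s Suc by simp
          show ?thesis using less.IH[OF lt, rule_format, of n' j ?Ns1] 1 by simp
        next
          case 2
          then show ?thesis using meaningful_Q[of n' ?Ns1] by simp
        next
          case 3
          have lt: "n' + (j - 1) < s" using s Suc 3 by simp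
          have "dCBN_meaningful (lams n' (apps (DVar (j - 1)) ?Ns1))" using less.IH[OF lt, rule_format, of n' "j - 1" ?Ns1] by simp
          then show ?thesis using 3 by simp
        qed
      qed
      then show ?thesis using e meaningful_lam Suc by (metis lams_Suc)
    qed
  qed
qed

lemma hnf_meaningful: "hnf M \<Longrightarrow> dCBN_meaningful M"
  unfolding hnf_def using meaningful_P by blast

lemma typed_meaningful: "taylor_n m M \<Longrightarrow> tj \<Theta> m A \<Longrightarrow> dCBN_meaningful M"
proof (induction "rsz m" arbitrary: m M \<Theta> A rule: less_induct)
  case less
  from progress[of M] show ?case
  proof
    assume "hnf M"
    then show ?thesis by (rule hnf_meaningful)
  next
    assume "\<exists>M'. hstep M M'"
    then obtain M' where h: "hstep M M'" by blast
    from hstep_sim[OF h less.prems] obtain m' where m': "taylor_n m' M'" "tj \<Theta> m' A" "rstep m (Some m')" by blast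
    have "rsz m' < rsz m" using rstep_rsz[OF m'(3) refl] .
    from less.hyps[OF this m'(1,2)] have "dCBN_meaningful M'" .
    moreover have "nstep\<^sup>*\<^sup>* M M'" using hstep_nstep[OF h] by blast
    ultimately show ?thesis using meaningful_back by blast
  qed
qed

theorem dirB: "nf_set (Taylor_n M) \<noteq> {} \<Longrightarrow> dCBN_meaningful M"
proof -
  assume "nf_set (Taylor_n M) \<noteq> {}"
  then obtain p m where h: "rnormal p" "taylor_n m M" "rred\<^sup>*\<^sup>* m p"
    by (auto simp: nf_set_def Taylor_n_def)
  have wm: "rwf m" using taylor_rwf[OF h(2)] .
  have "rwf p" using rred_rwf[OF h(3) wm] .
  from nf_typable[OF this h(1)] obtain \<Theta> A where "tj \<Theta> p A" by blast
  from good_exp[OF h(3) wm this] have "tj \<Theta> m A" .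
  then show ?thesis using typed_meaningful h(2) by blast
qed

theorem mainTheorem12:
  fixes M :: dterm
  shows "dCBN_meaningful M \<longleftrightarrow> nf_set (Taylor_n M) \<noteq> {}"
  using dirA dirB by blast


end
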